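(* Let $T$ be a complete classical theory in a countable language. Then $\mathbf{G}_0(T)$ is a Polish open topological groupoid with base $\mathbf{B}_0(T)$, and if $g=\mathrm{tp}(a,b)\in\mathbf{G}_0(T)$ then $t_g=\mathrm{tp}(a)$ and $s_g=\mathrm{tp}(b)$.
   Context: $\mathbf{G}_0(T)\subseteq S_{2\times\mathbb{N}}(T)$ (the space of types of pairs of $\mathbb{N}$-indexed sequences, logic topology, subspace topology on $\mathbf{G}_0$) is the set of types $\mathrm{tp}(a,b)$ where $a$ and $b$ are both enumerations of the same countable model $M\models T$ (sequences whose set of entries is exactly $M$). $\mathbf{B}_0(T)$ is the subset defined by $x=y$, i.e. the types $\mathrm{tp}(a,a)$, identified with $\mathrm{tp}(a)$. Composition: $\mathrm{tp}(a,b)\cdot\mathrm{tp}(b,c)=\mathrm{tp}(a,c)$ (defined when the middle types agree), inverse $\mathrm{tp}(a,b)^{-1}=\mathrm{tp}(b,a)$; $s_g=g^{-1}g$, $t_g=gg^{-1}$. A topological groupoid is open if its source map is open onto the base. *)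

theory Defs
  imports "HOL-Analysis.Analysis"
begin

datatype ('f,'v) trm = Var 'v | Fn 'f "('f,'v) trm list"

datatype ('f,'r,'v) fm =
    FBot
  | FEq "('f,'v) trm" "('f,'v) trm"
  | FRel 'r "('f,'v) trm list"
  | FNeg "('f,'r,'v) fm"
  | FConj "('f,'r,'v) fm" "('f,'r,'v) fm"
  | FEx 'v "('f,'r,'v) fm"

fun wf_trm :: "('f \<Rightarrow> nat) \<Rightarrow> ('f,'v) trm \<Rightarrow> bool" where
  "wf_trm arF (Var v) = True"
| "wf_trm arF (Fn f ts) = (length ts = arF f \<and> (\<forall>t\<in>set ts. wf_trm arF t))"

fun wf_fm :: "('f \<Rightarrow> nat) \<Rightarrow> ('r \<Rightarrow> nat) \<Rightarrow> ('f,'r,'v) fm \<Rightarrow> bool" where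
  "wf_fm arF arR FBot = True"
| "wf_fm arF arR (FEq s t) = (wf_trm arF s \<and> wf_trm arF t)"
| "wf_fm arF arR (FRel r ts) = (length ts = arR r \<and> (\<forall>t\<in>set ts. wf_trm arF t))"
| "wf_fm arF arR (FNeg \<phi>) = wf_fm arF arR \<phi>"
| "wf_fm arF arR (FConj \<phi> \<psi>) = (wf_fm arF arR \<phi> \<and> wf_fm arF arR \<psi>)"
| "wf_fm arF arR (FEx v \<phi>) = wf_fm arF arR \<phi>"

fun fv_trm :: "('f,'v) trm \<Rightarrow> 'v set" where
  "fv_trm (Var v) = {v}"
| "fv_trm (Fn f ts) = (\<Union>t\<in>set ts. fv_trm t)"

fun fv_fm :: "('f,'r,'v) fm \<Rightarrow> 'v set" where
  "fv_fm FBot = {}"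
| "fv_fm (FEq s t) = fv_trm s \<union> fv_trm t"
| "fv_fm (FRel r ts) = (\<Union>t\<in>set ts. fv_trm t)"
| "fv_fm (FNeg \<phi>) = fv_fm \<phi>"
| "fv_fm (FConj \<phi> \<psi>) = fv_fm \<phi> \<union> fv_fm \<psi>"
| "fv_fm (FEx v \<phi>) = fv_fm \<phi> - {v}"

definition sentence :: "('f \<Rightarrow> nat) \<Rightarrow> ('r \<Rightarrow> nat) \<Rightarrow> ('f,'r,'v) fm \<Rightarrow> bool" where
  "sentence arF arR \<phi> \<longleftrightarrow> wf_fm arF arR \<phi> \<and> fv_fm \<phi> = {}"

record ('a,'f,'r) struc =
  carr :: "'a set"
  fint :: "'f \<Rightarrow> 'a list \<Rightarrow> 'a"
  rint :: "'r \<Rightarrow> 'a list \<Rightarrow> bool"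

definition is_struc :: "('f \<Rightarrow> nat) \<Rightarrow> ('a,'f,'r) struc \<Rightarrow> bool" where
  "is_struc arF M \<longleftrightarrow> carr M \<noteq> {} \<and>
     (\<forall>f xs. length xs = arF f \<and> set xs \<subseteq> carr M \<longrightarrow> fint M f xs \<in> carr M)"

fun evl :: "('a,'f,'r) struc \<Rightarrow> ('v \<Rightarrow> 'a) \<Rightarrow> ('f,'v) trm \<Rightarrow> 'a" where
  "evl M e (Var v) = e v"
| "evl M e (Fn f ts) = fint M f (map (evl M e) ts)"

fun sat :: "('a,'f,'r) struc \<Rightarrow> ('v \<Rightarrow> 'a) \<Rightarrow> ('f,'r,'v) fm \<Rightarrow> bool" where
  "sat M e FBot = False"
| "sat M e (FEq s t) = (evl M e s = evl M e t)"
| "sat M e (FRel r ts) = rint M r (map (evl M e) ts)"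
| "sat M e (FNeg \<phi>) = (\<not> sat M e \<phi>)"
| "sat M e (FConj \<phi> \<psi>) = (sat M e \<phi> \<and> sat M e \<psi>)"
| "sat M e (FEx v \<phi>) = (\<exists>x\<in>carr M. sat M (e(v := x)) \<phi>)"

text \<open>Models considered have carriers inside nat: by downward Loewenheim--Skolem (countable
  language) this loses nothing for consistency/completeness, and every countable model
  is isomorphic to one with carrier contained in nat.\<close>

definition is_model :: "('f \<Rightarrow> nat) \<Rightarrow> ('a,'f,'r) struc \<Rightarrow> ('f,'r,nat) fm set \<Rightarrow> bool" where
  "is_model arF M T \<longleftrightarrow> is_struc arF M \<and>
     (\<forall>\<sigma>\<in>T. \<forall>e. range e \<subseteq> carr M \<longrightarrow> sat M e \<sigma>)"

definition complete_theory :: "('f \<Rightarrow> nat) \<Rightarrow> ('r \<Rightarrow> nat) \<Rightarrow> ('f,'r,nat) fm set \<Rightarrow> bool" where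
  "complete_theory arF arR T \<longleftrightarrow>
     (\<forall>\<sigma>\<in>T. sentence arF arR \<sigma>) \<and>
     (\<exists>M :: (nat,'f,'r) struc. is_model arF M T) \<and>
     (\<forall>\<sigma> :: ('f,'r,nat) fm. sentence arF arR \<sigma> \<longrightarrow>
        (\<forall>M :: (nat,'f,'r) struc. is_model arF M T \<longrightarrow>
            (\<forall>e. range e \<subseteq> carr M \<longrightarrow> sat M e \<sigma>)) \<or>
        (\<forall>M :: (nat,'f,'r) struc. is_model arF M T \<longrightarrow>
            (\<forall>e. range e \<subseteq> carr M \<longrightarrow> sat M e (FNeg \<sigma>))))"

definition tp :: "('f \<Rightarrow> nat) \<Rightarrow> ('r \<Rightarrow> nat) \<Rightarrow> ('a,'f,'r) struc \<Rightarrow> ('v \<Rightarrow> 'a) \<Rightarrow> ('f,'r,'v) fm set" where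
  "tp arF arR M e = {\<phi>. wf_fm arF arR \<phi> \<and> sat M e \<phi>}"

definition complete_types :: "('f \<Rightarrow> nat) \<Rightarrow> ('r \<Rightarrow> nat) \<Rightarrow> ('f,'r,nat) fm set \<Rightarrow> ('f,'r,'v) fm set set" where
  "complete_types arF arR T = {p.
     (\<forall>\<phi>\<in>p. wf_fm arF arR \<phi>) \<and>
     (\<forall>\<phi>. wf_fm arF arR \<phi> \<longrightarrow> \<phi> \<in> p \<or> FNeg \<phi> \<in> p) \<and>
     (\<forall>F. finite F \<and> F \<subseteq> p \<longrightarrow>
        (\<exists>(M :: (nat,'f,'r) struc) e. is_model arF M T \<and> range e \<subseteq> carr M \<and> (\<forall>\<phi>\<in>F. sat M e \<phi>)))}"

definition logic_topology :: "('f \<Rightarrow> nat) \<Rightarrow> ('r \<Rightarrow> nat) \<Rightarrow> ('f,'r,nat) fm set \<Rightarrow> ('f,'r,'v) fm set topology" where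
  "logic_topology arF arR T = topology_generated_by
     {{p \<in> complete_types arF arR T. \<phi> \<in> p} | \<phi>. wf_fm arF arR \<phi>}"

text \<open>Pair of N-indexed sequences as an assignment for variables 2 \<times> N:
  x_i = (False, i), y_i = (True, i).\<close>

definition pr :: "(nat \<Rightarrow> 'a) \<Rightarrow> (nat \<Rightarrow> 'a) \<Rightarrow> bool \<times> nat \<Rightarrow> 'a" where
  "pr a b = (\<lambda>(c, i). if c then b i else a i)"

definition tp2 :: "('f \<Rightarrow> nat) \<Rightarrow> ('r \<Rightarrow> nat) \<Rightarrow> ('a,'f,'r) struc \<Rightarrow> (nat \<Rightarrow> 'a) \<Rightarrow> (nat \<Rightarrow> 'a)
     \<Rightarrow> ('f,'r,bool \<times> nat) fm set" where
  "tp2 arF arR M a b = tp arF arR M (pr a b)"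

definition enum :: "('a,'f,'r) struc \<Rightarrow> (nat \<Rightarrow> 'a) \<Rightarrow> bool" where
  "enum M a \<longleftrightarrow> range a = carr M"

definition G0 :: "('f \<Rightarrow> nat) \<Rightarrow> ('r \<Rightarrow> nat) \<Rightarrow> ('f,'r,nat) fm set \<Rightarrow> ('f,'r,bool \<times> nat) fm set set" where
  "G0 arF arR T = {tp2 arF arR M a b | (M :: (nat,'f,'r) struc) a b.
      is_model arF M T \<and> enum M a \<and> enum M b}"

definition B0 :: "('f \<Rightarrow> nat) \<Rightarrow> ('r \<Rightarrow> nat) \<Rightarrow> ('f,'r,nat) fm set \<Rightarrow> ('f,'r,bool \<times> nat) fm set set" where
  "B0 arF arR T = {p \<in> G0 arF arR T. \<forall>i. FEq (Var (False, i)) (Var (True, i)) \<in> p}"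

definition G0_topology :: "('f \<Rightarrow> nat) \<Rightarrow> ('r \<Rightarrow> nat) \<Rightarrow> ('f,'r,nat) fm set \<Rightarrow> ('f,'r,bool \<times> nat) fm set topology" where
  "G0_topology arF arR T = subtopology (logic_topology arF arR T) (G0 arF arR T)"

definition G0_inv :: "('f \<Rightarrow> nat) \<Rightarrow> ('r \<Rightarrow> nat) \<Rightarrow> ('f,'r,nat) fm set \<Rightarrow> ('f,'r,bool \<times> nat) fm set \<Rightarrow> ('f,'r,bool \<times> nat) fm set" where
  "G0_inv arF arR T g = (THE h. \<exists>(M :: (nat,'f,'r) struc) a b.
      is_model arF M T \<and> enum M a \<and> enum M b \<and> g = tp2 arF arR M a b \<and> h = tp2 arF arR M b a)"

definition G0_composable :: "('f \<Rightarrow> nat) \<Rightarrow> ('r \<Rightarrow> nat) \<Rightarrow> ('f,'r,nat) fm set \<Rightarrow> ('f,'r,bool \<times> nat) fm set \<Rightarrow> ('f,'r,bool \<times> nat) fm set \<Rightarrow> bool" where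
  "G0_composable arF arR T g h \<longleftrightarrow> (\<exists>(M :: (nat,'f,'r) struc) a b (M' :: (nat,'f,'r) struc) b' c.
      is_model arF M T \<and> enum M a \<and> enum M b \<and> is_model arF M' T \<and> enum M' b' \<and> enum M' c \<and>
      g = tp2 arF arR M a b \<and> h = tp2 arF arR M' b' c \<and>
      (tp arF arR M b :: ('f,'r,nat) fm set) = tp arF arR M' b')"

definition G0_mul :: "('f \<Rightarrow> nat) \<Rightarrow> ('r \<Rightarrow> nat) \<Rightarrow> ('f,'r,nat) fm set \<Rightarrow> ('f,'r,bool \<times> nat) fm set \<Rightarrow> ('f,'r,bool \<times> nat) fm set \<Rightarrow> ('f,'r,bool \<times> nat) fm set" where
  "G0_mul arF arR T g h = (THE k. \<exists>(M :: (nat,'f,'r) struc) a b c.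
      is_model arF M T \<and> enum M a \<and> enum M b \<and> enum M c \<and>
      g = tp2 arF arR M a b \<and> h = tp2 arF arR M b c \<and> k = tp2 arF arR M a c)"

definition Polish_space :: "'a topology \<Rightarrow> bool" where
  "Polish_space X \<longleftrightarrow> separable_space X \<and> completely_metrizable_space X"

definition open_topological_groupoid ::
  "'g topology \<Rightarrow> 'g set \<Rightarrow> ('g \<Rightarrow> 'g \<Rightarrow> bool) \<Rightarrow> ('g \<Rightarrow> 'g \<Rightarrow> 'g) \<Rightarrow> ('g \<Rightarrow> 'g) \<Rightarrow> bool" where
  "open_topological_groupoid X B cmp mul iv \<longleftrightarrow>
    (let G = topspace X; s = (\<lambda>g. mul (iv g) g); t = (\<lambda>g. mul g (iv g)) in
      (\<forall>g\<in>G. iv g \<in> G \<and> iv (iv g) = g) \<and>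
      (\<forall>g\<in>G. \<forall>h\<in>G. cmp g h \<longrightarrow> mul g h \<in> G) \<and>
      (\<forall>g\<in>G. cmp (iv g) g \<and> cmp g (iv g)) \<and>
      (\<forall>g\<in>G. \<forall>h\<in>G. cmp g h \<longleftrightarrow> s g = t h) \<and>
      (\<forall>g\<in>G. \<forall>h\<in>G. \<forall>k\<in>G. cmp g h \<and> cmp h k \<longrightarrow>
          cmp (mul g h) k \<and> cmp g (mul h k) \<and> mul (mul g h) k = mul g (mul h k)) \<and>
      (\<forall>g\<in>G. \<forall>h\<in>G. cmp g h \<longrightarrow> mul (iv g) (mul g h) = h \<and> mul (mul g h) (iv h) = g) \<and>
      B = s ` G \<and>
      continuous_map X X iv \<and>
      continuous_map (subtopology (prod_topology X X) {(g, h). g \<in> G \<and> h \<in> G \<and> cmp g h}) X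
        (\<lambda>(g, h). mul g h) \<and>
      open_map X (subtopology X B) s)"

end

theory Submission
  imports Defs
begin

lemma finite_fv_trm: "finite (fv_trm t)" by (induction t) auto
lemma finite_fv_fm: "finite (fv_fm \<phi>)" by (induction \<phi>) (auto simp: finite_fv_trm)

lemma evl_agree: "(\<And>v. v \<in> fv_trm t \<Longrightarrow> e v = e' v) \<Longrightarrow> evl M e t = evl M e' t"
proof (induction t)
  case (Fn f ts)
  have "map (evl M e) ts = map (evl M e') ts"
    by (rule map_cong[OF refl], rule Fn.IH) (use Fn.prems in auto)
  then show ?case by (metis evl.simps(2))
qed simp

lemma sat_agree: "(\<And>v. v \<in> fv_fm \<phi> \<Longrightarrow> e v = e' v) \<Longrightarrow> sat M e \<phi> = sat M e' \<phi>"
proof (induction \<phi> arbitrary: e e')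
  case (FEq s t) then show ?case using evl_agree[of s e e' M] evl_agree[of t e e' M] by auto
next
  case (FRel r ts)
  have "map (evl M e) ts = map (evl M e') ts"
    by (rule map_cong[OF refl], rule evl_agree) (use FRel in auto)
  then show ?case by (metis sat.simps(3))
next
  case (FEx v \<phi>)
  have "\<And>x. sat M (e(v:=x)) \<phi> = sat M (e'(v:=x)) \<phi>"
    using FEx.prems by (intro FEx.IH) auto
  then show ?case by simp
next
  case (FNeg \<phi>)
  have "sat M e \<phi> = sat M e' \<phi>" using FNeg.prems by (intro FNeg.IH) auto
  then show ?case by simp
next
  case (FConj \<phi> \<psi>)
  have "sat M e \<phi> = sat M e' \<phi>" using FConj.prems by (intro FConj.IH(1)) auto
  moreover have "sat M e \<psi> = sat M e' \<psi>" using FConj.prems by (intro FConj.IH(2)) auto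
  ultimately show ?case by simp
qed simp

fun rent :: "('v \<Rightarrow> 'w) \<Rightarrow> ('f,'v) trm \<Rightarrow> ('f,'w) trm" where
  "rent \<rho> (Var v) = Var (\<rho> v)"
| "rent \<rho> (Fn f ts) = Fn f (map (rent \<rho>) ts)"

primrec renf :: "('v \<Rightarrow> 'w) \<Rightarrow> ('f,'r,'v) fm \<Rightarrow> ('f,'r,'w) fm" where
  "renf \<rho> FBot = FBot"
| "renf \<rho> (FEq s t) = FEq (rent \<rho> s) (rent \<rho> t)"
| "renf \<rho> (FRel r ts) = FRel r (map (rent \<rho>) ts)"
| "renf \<rho> (FNeg \<phi>) = FNeg (renf \<rho> \<phi>)"
| "renf \<rho> (FConj \<phi> \<psi>) = FConj (renf \<rho> \<phi>) (renf \<rho> \<psi>)"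
| "renf \<rho> (FEx v \<phi>) = FEx (\<rho> v) (renf \<rho> \<phi>)"

lemma evl_rent: "evl M e (rent \<rho> t) = evl M (e \<circ> \<rho>) t"
proof (induction t)
  case (Fn f ts)
  have "map (evl M e \<circ> rent \<rho>) ts = map (evl M (e \<circ> \<rho>)) ts"
    by (rule map_cong[OF refl]) (simp add: Fn.IH comp_def)
  then show ?case by (simp add: comp_def del: map_eq_conv)
qed simp

lemma wf_rent: "wf_trm arF (rent \<rho> t) = wf_trm arF t"
  by (induction t) auto

lemma fv_rent: "fv_trm (rent \<rho> t) = \<rho> ` fv_trm t"
  by (induction t) auto

lemma sat_renf: "inj \<rho> \<Longrightarrow> sat M e (renf \<rho> \<phi>) = sat M (e \<circ> \<rho>) \<phi>"
proof (induction \<phi> arbitrary: e)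
  case (FEx v \<phi>)
  have "\<And>x. e(\<rho> v := x) \<circ> \<rho> = (e \<circ> \<rho>)(v := x)"
    using FEx.prems by (auto simp: fun_eq_iff inj_eq)
  have "sat M e (renf \<rho> (FEx v \<phi>)) = (\<exists>x\<in>carr M. sat M (e(\<rho> v:=x)) (renf \<rho> \<phi>))" by simp
  also have "\<dots> = (\<exists>x\<in>carr M. sat M (e(\<rho> v:=x) \<circ> \<rho>) \<phi>)" using FEx by blast
  also have "\<dots> = (\<exists>x\<in>carr M. sat M ((e \<circ> \<rho>)(v:=x)) \<phi>)" using \<open>\<And>x. e(\<rho> v := x) \<circ> \<rho> = (e \<circ> \<rho>)(v := x)\<close> by simp
  finally show ?case by (simp only: sat.simps renf.simps)
next
  case (FRel r ts)
  have "map (evl M e \<circ> rent \<rho>) ts = map (evl M (e \<circ> \<rho>)) ts"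
    by (rule map_cong[OF refl]) (simp add: evl_rent)
  then show ?case by (simp add: comp_def del: map_eq_conv)
qed (auto simp: evl_rent)

lemma wf_renf: "wf_fm arF arR (renf \<rho> \<phi>) = wf_fm arF arR \<phi>"
  by (induction \<phi>) (auto simp: wf_rent)

lemma fv_renf: "inj \<rho> \<Longrightarrow> fv_fm (renf \<rho> \<phi>) = \<rho> ` fv_fm \<phi>"
  by (induction \<phi>) (auto simp: fv_rent inj_eq)

definition fresh :: "'v set \<Rightarrow> 'v" where
  "fresh S = (SOME u. u \<notin> S)"

lemma fresh_notin: "infinite (UNIV :: 'v set) \<Longrightarrow> finite (S :: 'v set) \<Longrightarrow> fresh S \<notin> S"
  unfolding fresh_def by (rule someI_ex) (metis ex_new_if_finite)

primrec subst :: "('v \<Rightarrow> 'v) \<Rightarrow> ('f,'r,'v) fm \<Rightarrow> ('f,'r,'v) fm" where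
  "subst \<sigma> FBot = FBot"
| "subst \<sigma> (FEq s t) = FEq (rent \<sigma> s) (rent \<sigma> t)"
| "subst \<sigma> (FRel r ts) = FRel r (map (rent \<sigma>) ts)"
| "subst \<sigma> (FNeg \<phi>) = FNeg (subst \<sigma> \<phi>)"
| "subst \<sigma> (FConj \<phi> \<psi>) = FConj (subst \<sigma> \<phi>) (subst \<sigma> \<psi>)"
| "subst \<sigma> (FEx v \<phi>) = (let u = fresh (\<sigma> ` (fv_fm \<phi> - {v})) in FEx u (subst (\<sigma>(v:=u)) \<phi>))"

lemma wf_fm_subst: "wf_fm arF arR (subst \<sigma> \<phi>) = wf_fm arF arR \<phi>"
  by (induction \<phi> arbitrary: \<sigma>) (auto simp: wf_rent Let_def)

lemma sat_subst:
  assumes inf: "infinite (UNIV :: 'v set)"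
  shows "sat M e (subst \<sigma> (\<phi> :: ('f,'r,'v) fm)) = sat M (e \<circ> \<sigma>) \<phi>"
proof (induction \<phi> arbitrary: \<sigma> e)
  case (FEx v \<phi>)
  define u where "u = fresh (\<sigma> ` (fv_fm \<phi> - {v}))"
  have u: "u \<notin> \<sigma> ` (fv_fm \<phi> - {v})"
    unfolding u_def by (rule fresh_notin[OF inf]) (simp add: finite_fv_fm)
  have "\<And>x. sat M (e(u:=x) \<circ> \<sigma>(v:=u)) \<phi> = sat M ((e \<circ> \<sigma>)(v:=x)) \<phi>"
    by (rule sat_agree) (use u in auto)
  have "sat M e (subst \<sigma> (FEx v \<phi>)) = (\<exists>x\<in>carr M. sat M (e(u:=x)) (subst (\<sigma>(v:=u)) \<phi>))"
    by (simp add: u_def[symmetric] Let_def)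
  also have "\<dots> = (\<exists>x\<in>carr M. sat M (e(u:=x) \<circ> \<sigma>(v:=u)) \<phi>)" using FEx by blast
  also have "\<dots> = (\<exists>x\<in>carr M. sat M ((e \<circ> \<sigma>)(v:=x)) \<phi>)" using \<open>\<And>x. sat M (e(u:=x) \<circ> \<sigma>(v:=u)) \<phi> = sat M ((e \<circ> \<sigma>)(v:=x)) \<phi>\<close> by simp
  finally show ?case by (simp only: sat.simps)
next
  case (FRel r ts)
  have "map (evl M e \<circ> rent \<sigma>) ts = map (evl M (e \<circ> \<sigma>)) ts"
    by (rule map_cong[OF refl]) (simp add: evl_rent)
  then show ?case by (simp add: comp_def del: map_eq_conv)
qed (auto simp: evl_rent)

definition conjs :: "('f,'r,'v) fm list \<Rightarrow> ('f,'r,'v) fm" where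
  "conjs xs = foldr FConj xs (FNeg FBot)"

lemma sat_conjs: "sat M e (conjs xs) = (\<forall>\<phi>\<in>set xs. sat M e \<phi>)"
  unfolding conjs_def by (induction xs) auto

lemma wf_conjs: "wf_fm arF arR (conjs xs) = (\<forall>\<phi>\<in>set xs. wf_fm arF arR \<phi>)"
  unfolding conjs_def by (induction xs) auto

definition exs :: "'v list \<Rightarrow> ('f,'r,'v) fm \<Rightarrow> ('f,'r,'v) fm" where
  "exs vs \<phi> = foldr FEx vs \<phi>"

lemma wf_exs: "wf_fm arF arR (exs vs \<phi>) = wf_fm arF arR \<phi>"
  unfolding exs_def by (induction vs) auto

lemma sat_exs: "sat M e (exs vs \<phi>) \<longleftrightarrow>
   (\<exists>e'. (\<forall>v\<in>set vs. e' v \<in> carr M) \<and> (\<forall>v. v \<notin> set vs \<longrightarrow> e' v = e v) \<and> sat M e' \<phi>)"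
proof (induction vs arbitrary: e)
  case Nil
  then show ?case by (auto simp: exs_def) (metis ext)
next
  case (Cons v vs)
  have "sat M e (exs (v # vs) \<phi>) = (\<exists>x\<in>carr M. sat M (e(v:=x)) (exs vs \<phi>))"
    by (simp add: exs_def)
  also have "\<dots> \<longleftrightarrow> (\<exists>e'. (\<forall>w\<in>set (v#vs). e' w \<in> carr M) \<and> (\<forall>w. w \<notin> set (v#vs) \<longrightarrow> e' w = e w) \<and> sat M e' \<phi>)"
  proof
    assume "\<exists>x\<in>carr M. sat M (e(v:=x)) (exs vs \<phi>)"
    then obtain x e' where "x \<in> carr M" "\<forall>w\<in>set vs. e' w \<in> carr M"
      "\<forall>w. w \<notin> set vs \<longrightarrow> e' w = (e(v:=x)) w" "sat M e' \<phi>" using Cons by blast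
    then show "\<exists>e'. (\<forall>w\<in>set (v#vs). e' w \<in> carr M) \<and> (\<forall>w. w \<notin> set (v#vs) \<longrightarrow> e' w = e w) \<and> sat M e' \<phi>"
    proof (intro exI[of _ e'] conjI)
      show "\<forall>w\<in>set (v#vs). e' w \<in> carr M"
        using \<open>x \<in> carr M\<close> \<open>\<forall>w\<in>set vs. e' w \<in> carr M\<close> \<open>\<forall>w. w \<notin> set vs \<longrightarrow> e' w = (e(v:=x)) w\<close>
        by (cases "v \<in> set vs") auto
    next
      show "\<forall>w. w \<notin> set (v#vs) \<longrightarrow> e' w = e w"
      proof (intro allI impI)
        fix w assume "w \<notin> set (v#vs)"
        then have "w \<notin> set vs" "w \<noteq> v" by auto
        then show "e' w = e w" using \<open>\<forall>w. w \<notin> set vs \<longrightarrow> e' w = (e(v:=x)) w\<close> by simp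
      qed
    qed simp
  next
    assume "\<exists>e'. (\<forall>w\<in>set (v#vs). e' w \<in> carr M) \<and> (\<forall>w. w \<notin> set (v#vs) \<longrightarrow> e' w = e w) \<and> sat M e' \<phi>"
    then obtain e' where e': "\<forall>w\<in>set (v#vs). e' w \<in> carr M" "\<forall>w. w \<notin> set (v#vs) \<longrightarrow> e' w = e w" "sat M e' \<phi>"
      by blast
    have "sat M (e(v:=e' v)) (exs vs \<phi>)"
      unfolding Cons by (rule exI[of _ e']) (use e' in auto)
    then show "\<exists>x\<in>carr M. sat M (e(v:=x)) (exs vs \<phi>)" using e' by auto
  qed
  finally show ?case .
qed

lemma evl_in_carr:
  assumes "is_struc arF M" "\<forall>v. e v \<in> carr M" "wf_trm arF t"
  shows "evl M e t \<in> carr M"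
  using assms(3)
proof (induction t)
  case (Var v) then show ?case using assms(2) by simp
next
  case (Fn f ts)
  have "\<forall>x\<in>set ts. evl M e x \<in> carr M"
  proof
    fix x assume "x \<in> set ts"
    then show "evl M e x \<in> carr M" using Fn.IH[of x] Fn.prems by simp
  qed
  then have "set (map (evl M e) ts) \<subseteq> carr M" by auto
  then show ?case using assms(1) Fn.prems unfolding is_struc_def by simp
qed

definition iso :: "('f \<Rightarrow> nat) \<Rightarrow> ('r \<Rightarrow> nat) \<Rightarrow> ('a,'f,'r) struc \<Rightarrow> ('b,'f,'r) struc \<Rightarrow> ('a \<Rightarrow> 'b) \<Rightarrow> bool" where
  "iso arF arR M N h \<longleftrightarrow> bij_betw h (carr M) (carr N) \<and>
     (\<forall>f xs. length xs = arF f \<and> set xs \<subseteq> carr M \<longrightarrow> h (fint M f xs) = fint N f (map h xs)) \<and>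
     (\<forall>r xs. length xs = arR r \<and> set xs \<subseteq> carr M \<longrightarrow> rint M r xs = rint N r (map h xs))"

lemma iso_evl:
  assumes "is_struc arF M" "iso arF arR M N h" "\<forall>v. e v \<in> carr M" "wf_trm arF t"
  shows "h (evl M e t) = evl N (h \<circ> e) t"
  using assms(4)
proof (induction t)
  case (Fn f ts)
  have sub: "set (map (evl M e) ts) \<subseteq> carr M" using Fn.prems evl_in_carr[OF assms(1) assms(3)] by auto
  have "h (evl M e (Fn f ts)) = fint N f (map h (map (evl M e) ts))"
    using assms(2) sub Fn.prems unfolding iso_def by simp
  also have "map h (map (evl M e) ts) = map (evl N (h \<circ> e)) ts"
  proof -
    have "\<forall>x\<in>set ts. h (evl M e x) = evl N (h \<circ> e) x"
      using Fn.IH Fn.prems by (simp add: comp_def)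
    then show ?thesis by simp
  qed
  finally show ?case by (simp add: comp_def del: map_map)
qed simp

lemma iso_sat:
  assumes "is_struc arF M" "iso arF arR M N h" "wf_fm arF arR \<phi>"
  shows "\<And>e. \<forall>v. e v \<in> carr M \<Longrightarrow> sat N (h \<circ> e) \<phi> = sat M e \<phi>"
  using assms(3)
proof (induction \<phi>)
  case (FEq s t)
  have inj: "inj_on h (carr M)" using assms(2) unfolding iso_def bij_betw_def by blast
  have ws: "wf_trm arF s" "wf_trm arF t" using FEq by auto
  have "sat N (h \<circ> e) (FEq s t) = (h (evl M e s) = h (evl M e t))"
    using iso_evl[OF assms(1,2) FEq(1) ws(1)] iso_evl[OF assms(1,2) FEq(1) ws(2)] by simp
  also have "\<dots> = (evl M e s = evl M e t)"
    using inj_onD[OF inj] evl_in_carr[OF assms(1) FEq(1) ws(1)] evl_in_carr[OF assms(1) FEq(1) ws(2)] by auto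
  finally show ?case by (simp add: comp_def)
next
  case (FRel r ts)
  have sub: "set (map (evl M e) ts) \<subseteq> carr M" using FRel evl_in_carr[OF assms(1) FRel(1)] by auto
  have "map (evl N (h \<circ> e)) ts = map h (map (evl M e) ts)"
    using FRel iso_evl[OF assms(1,2) FRel(1)] by auto
  then show ?case using assms(2) sub FRel unfolding iso_def by (simp add: comp_def del: map_map)
next
  case (FEx v \<phi>)
  have img: "h ` carr M = carr N" using assms(2) unfolding iso_def bij_betw_def by blast
  have eq: "\<And>x. (h \<circ> e)(v := h x) = h \<circ> (e(v:=x))" by (auto simp: fun_eq_iff)
  have "sat N (h \<circ> e) (FEx v \<phi>) = (\<exists>y\<in>h ` carr M. sat N ((h \<circ> e)(v := y)) \<phi>)"
    unfolding img by simp
  also have "\<dots> = (\<exists>x\<in>carr M. sat N ((h \<circ> e)(v := h x)) \<phi>)"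
    by blast
  also have "\<dots> = (\<exists>x\<in>carr M. sat M (e(v:=x)) \<phi>)"
  proof -
    have wf\<phi>: "wf_fm arF arR \<phi>" using FEx by simp
    have "\<And>x. x \<in> carr M \<Longrightarrow> sat N ((h \<circ> e)(v := h x)) \<phi> = sat M (e(v:=x)) \<phi>"
    proof -
      fix x assume x: "x \<in> carr M"
      have c: "\<forall>w. (e(v:=x)) w \<in> carr M" using x FEx by auto
      show "sat N ((h \<circ> e)(v := h x)) \<phi> = sat M (e(v:=x)) \<phi>"
        unfolding eq by (rule FEx.IH[OF c wf\<phi>])
    qed
    then show ?thesis by blast
  qed
  finally show ?case by (simp only: sat.simps)
next
  case (FNeg \<phi>) then show ?case by simp
next
  case (FConj \<phi> \<psi>) then show ?case by simp
qed simp

lemma iso_tp: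
  assumes "is_struc arF M" "iso arF arR M N h" "\<forall>v. e v \<in> carr M"
  shows "tp arF arR N (h \<circ> e) = tp arF arR M e"
  using iso_sat[OF assms(1,2) _ assms(3)] unfolding tp_def by auto

lemma tp_iso:
  assumes M: "is_struc arF M" and N: "is_struc arF N"
    and e: "range e = carr M" and e': "range e' = carr N"
    and tpeq: "tp arF arR M e = tp arF arR N e'"
  shows "\<exists>h. iso arF arR M N h \<and> (\<forall>v. h (e v) = e' v)"
proof -
  have satiff: "\<And>\<phi>. wf_fm arF arR \<phi> \<Longrightarrow> sat M e \<phi> = sat N e' \<phi>"
    using tpeq unfolding tp_def by (auto simp: set_eq_iff)
  have eqiff: "\<And>v w. e v = e w \<longleftrightarrow> e' v = e' w"
    using satiff[of "FEq (Var v) (Var w)" for v w] by simp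
  define h where "h x = e' (SOME v. e v = x)" for x
  have he: "h (e v) = e' v" for v
  proof -
    have "e (SOME w. e w = e v) = e v" by (rule someI) simp
    then show ?thesis unfolding h_def using eqiff by blast
  qed
  have "inj_on h (carr M)"
  proof (rule inj_onI)
    fix x y assume "x \<in> carr M" "y \<in> carr M" "h x = h y"
    then obtain v w where "x = e v" "y = e w" using e by blast
    then show "x = y" using \<open>h x = h y\<close> he eqiff by metis
  qed
  moreover have "h ` carr M = carr N" using e e' he by (auto simp flip: e e') (metis rangeI image_eqI)
  ultimately have bij: "bij_betw h (carr M) (carr N)" by (simp add: bij_betw_def)
  have pick: "\<And>xs. set xs \<subseteq> carr M \<Longrightarrow> \<exists>vs. xs = map e vs"
  proof -
    fix xs assume "set xs \<subseteq> carr M"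
    then have "\<forall>x\<in>set xs. \<exists>v. x = e v" using e by auto
    then show "\<exists>vs. xs = map e vs" by (simp only: ex_map_conv)
  qed
  have hfun: "h (fint M f xs) = fint N f (map h xs)" if a1: "length xs = arF f" and a2: "set xs \<subseteq> carr M" for f xs
  proof -
    obtain vs where vs: "xs = map e vs" using pick a2 by blast
    have "fint M f xs \<in> carr M" using M a1 a2 unfolding is_struc_def by blast
    then obtain w where w: "fint M f xs = e w" using e by blast
    have wf: "wf_fm arF arR (FEq (Fn f (map Var vs)) (Var w))" using a1 vs by auto
    have "sat M e (FEq (Fn f (map Var vs)) (Var w))" using w vs by (simp add: comp_def)
    then have "sat N e' (FEq (Fn f (map Var vs)) (Var w))" using satiff[OF wf] by simp
    then have "fint N f (map e' vs) = e' w" by (simp add: comp_def)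
    moreover have "map h xs = map e' vs" using vs he by simp
    ultimately show ?thesis using w he by simp
  qed
  have rel: "rint M r xs = rint N r (map h xs)" if a1: "length xs = arR r" and a2: "set xs \<subseteq> carr M" for r xs
  proof -
    obtain vs where vs: "xs = map e vs" using pick a2 by blast
    have wf: "wf_fm arF arR (FRel r (map Var vs))" using a1 vs by auto
    have "sat M e (FRel r (map Var vs)) = sat N e' (FRel r (map Var vs))" using satiff[OF wf] .
    then have r1: "rint M r (map e vs) = rint N r (map e' vs)" by (simp add: comp_def)
    have m: "map h xs = map e' vs" using vs he by simp
    show ?thesis using vs m r1 by metis
  qed
  show ?thesis using bij hfun rel he unfolding iso_def by blast
qed

lemma ct_wf: "p \<in> complete_types arF arR T \<Longrightarrow> \<phi> \<in> p \<Longrightarrow> wf_fm arF arR \<phi>"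
  unfolding complete_types_def by simp

lemma ct_max: "p \<in> complete_types arF arR T \<Longrightarrow> wf_fm arF arR \<phi> \<Longrightarrow> \<phi> \<in> p \<or> FNeg \<phi> \<in> p"
  unfolding complete_types_def by simp

lemma ct_sat:
  assumes "p \<in> complete_types arF arR T" "finite F" "F \<subseteq> p"
  shows "\<exists>(M :: (nat,'f,'r) struc) e. is_model arF M T \<and> range e \<subseteq> carr M \<and> (\<forall>\<phi>\<in>F. sat M e \<phi>)"
proof -
  have "\<forall>F. finite F \<and> F \<subseteq> p \<longrightarrow> (\<exists>(M :: (nat,'f,'r) struc) e. is_model arF M T \<and> range e \<subseteq> carr M \<and> (\<forall>\<phi>\<in>F. sat M e \<phi>))"
    using assms(1) unfolding complete_types_def by simp
  then show ?thesis using assms(2,3) by simp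
qed

lemma ct_closed:
  assumes p: "p \<in> complete_types arF arR T" and F: "finite F" "F \<subseteq> p" and wf: "wf_fm arF arR \<psi>"
    and sem: "\<And>(M :: (nat,'f,'r) struc) e. is_model arF M T \<Longrightarrow> range e \<subseteq> carr M \<Longrightarrow> (\<forall>\<phi>\<in>F. sat M e \<phi>) \<Longrightarrow> sat M e \<psi>"
  shows "\<psi> \<in> p"
proof (rule ccontr)
  assume "\<psi> \<notin> p"
  then have "FNeg \<psi> \<in> p" using ct_max[OF p wf] by simp
  then have "finite (insert (FNeg \<psi>) F)" "insert (FNeg \<psi>) F \<subseteq> p" using F by auto
  from ct_sat[OF p this] obtain M :: "(nat,'f,'r) struc" and e where "is_model arF M T" "range e \<subseteq> carr M"
     "\<forall>\<phi>\<in>insert (FNeg \<psi>) F. sat M e \<phi>" by blast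
  then show False using sem by (meson insertCI sat.simps(4))
qed

lemma ct_consistent:
  assumes p: "(p :: ('f,'r,'v) fm set) \<in> complete_types arF arR T" and "\<phi> \<in> p" "FNeg \<phi> \<in> p"
  shows False
proof -
  have "finite {\<phi>, FNeg \<phi>}" "{\<phi>, FNeg \<phi>} \<subseteq> p" using assms by auto
  from ct_sat[OF p this] obtain M :: "(nat,'f,'r) struc" and e where "\<forall>\<psi>\<in>{\<phi>, FNeg \<phi>}. sat M e \<psi>"
    by blast
  then show False by simp
qed

lemma ct_neg:
  assumes p: "p \<in> complete_types arF arR T" and wf: "wf_fm arF arR \<phi>"
  shows "FNeg \<phi> \<in> p \<longleftrightarrow> \<phi> \<notin> p"
  using ct_consistent[OF p] ct_max[OF p wf] by blast

lemma ct_conj: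
  assumes p: "p \<in> complete_types arF arR T" and wf: "wf_fm arF arR \<phi>" "wf_fm arF arR \<psi>"
  shows "FConj \<phi> \<psi> \<in> p \<longleftrightarrow> \<phi> \<in> p \<and> \<psi> \<in> p"
proof
  assume a: "FConj \<phi> \<psi> \<in> p"
  show "\<phi> \<in> p \<and> \<psi> \<in> p"
    using ct_closed[OF p _ _ wf(1), of "{FConj \<phi> \<psi>}"] ct_closed[OF p _ _ wf(2), of "{FConj \<phi> \<psi>}"] a by auto
next
  assume "\<phi> \<in> p \<and> \<psi> \<in> p"
  then show "FConj \<phi> \<psi> \<in> p"
    using ct_closed[OF p _ _ , of "{\<phi>, \<psi>}" "FConj \<phi> \<psi>"] wf by auto
qed

lemma ct_FBot: "p \<in> complete_types arF arR T \<Longrightarrow> FBot \<notin> p"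
  using ct_closed[of p arF arR T "{FBot}" "FNeg FBot"] ct_consistent[of p arF arR T FBot] by auto

lemma ct_top: "p \<in> complete_types arF arR T \<Longrightarrow> FNeg FBot \<in> p"
  using ct_closed[of p arF arR T "{}" "FNeg FBot"] by auto

lemma tp_ct:
  assumes "is_model arF (M :: (nat,'f,'r) struc) T" "range e \<subseteq> carr M"
  shows "tp arF arR M e \<in> complete_types arF arR T"
  unfolding complete_types_def tp_def using assms by (auto intro!: exI[of _ M] exI[of _ e])

lemma inf_V: "infinite (UNIV :: (bool \<times> nat) set)"
  by (simp add: finite_prod)

definition Good :: "('f \<Rightarrow> nat) \<Rightarrow> ('r \<Rightarrow> nat) \<Rightarrow> ('f,'r,nat) fm set \<Rightarrow> ('f,'r,bool \<times> nat) fm set set" where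
  "Good arF arR T = {p \<in> complete_types arF arR T.
     (\<forall>i. \<exists>j. FEq (Var (False,i)) (Var (True,j)) \<in> p) \<and>
     (\<forall>j. \<exists>i. FEq (Var (False,i)) (Var (True,j)) \<in> p) \<and>
     (\<forall>v \<phi>. wf_fm arF arR \<phi> \<and> FEx v \<phi> \<in> p \<longrightarrow> (\<exists>w. w \<noteq> v \<and> FEx v (FConj (FEq (Var v) (Var w)) \<phi>) \<in> p))}"

lemma range_pr: "range (pr a b) = range a \<union> range b"
proof (rule set_eqI)
  fix x
  have F: "pr a b (False,i) = a i" and T: "pr a b (True,i) = b i" for i by (simp_all add: pr_def)
  show "x \<in> range (pr a b) \<longleftrightarrow> x \<in> range a \<union> range b"
  proof
    assume "x \<in> range (pr a b)"
    then obtain c i where "x = pr a b (c,i)" by auto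
    then show "x \<in> range a \<union> range b" by (cases c) (auto simp: F T)
  next
    assume "x \<in> range a \<union> range b"
    then obtain i where "x = a i \<or> x = b i" by auto
    then have "x = pr a b (False,i) \<or> x = pr a b (True,i)" by (auto simp: pr_def)
    then show "x \<in> range (pr a b)" by blast
  qed
qed

lemma G0_sub_Good:
  fixes arF :: "'f \<Rightarrow> nat" and arR :: "'r \<Rightarrow> nat"
  shows "G0 arF arR T \<subseteq> Good arF arR T"
proof
  fix p assume "p \<in> G0 arF arR T"
  then obtain M :: "(nat,'f,'r) struc" and a b where M: "is_model arF M T" "enum M a" "enum M b"
    and p: "p = tp2 arF arR M a b" unfolding G0_def by blast
  have ra: "range a = carr M" and rb: "range b = carr M" using M unfolding enum_def by auto
  have rpr: "range (pr a b) \<subseteq> carr M" by (simp add: range_pr ra rb)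
  have ct: "p \<in> complete_types arF arR T" unfolding p tp2_def by (rule tp_ct[OF M(1) rpr])
  have prF: "pr a b (False, i) = a i" and prT: "pr a b (True, i) = b i" for i by (auto simp: pr_def)
  have 1: "\<exists>j. FEq (Var (False,i)) (Var (True,j)) \<in> p" for i
  proof -
    obtain j where "a i = b j" using ra rb by (metis rangeE rangeI)
    then show ?thesis unfolding p tp2_def tp_def using prF prT by auto
  qed
  have 2: "\<exists>i. FEq (Var (False,i)) (Var (True,j)) \<in> p" for j
  proof -
    obtain i where "a i = b j" using ra rb by (metis rangeE rangeI)
    then show ?thesis unfolding p tp2_def tp_def using prF prT by auto
  qed
  have 3: "\<exists>w. w \<noteq> v \<and> FEx v (FConj (FEq (Var v) (Var w)) \<phi>) \<in> p"
    if wf: "wf_fm arF arR \<phi>" and ex: "FEx v \<phi> \<in> p" for v \<phi>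
  proof -
    from ex obtain x where x: "x \<in> carr M" "sat M ((pr a b)(v:=x)) \<phi>"
      unfolding p tp2_def tp_def by auto
    obtain i j where ij: "a i = x" "b j = x" using x(1) ra rb by (metis rangeE)
    obtain w where w: "w \<noteq> v" "pr a b w = x"
    proof (cases "v = (False, i)")
      case True
      then show ?thesis using that[of "(True,j)"] ij prT by auto
    next
      case False
      then show ?thesis using that[of "(False,i)"] ij prF by auto
    qed
    have "sat M (pr a b) (FEx v (FConj (FEq (Var v) (Var w)) \<phi>))"
      using x w by (auto intro!: bexI[of _ x])
    moreover have "wf_fm arF arR (FEx v (FConj (FEq (Var v) (Var w)) \<phi>))" using wf by simp
    ultimately have "FEx v (FConj (FEq (Var v) (Var w)) \<phi>) \<in> p" unfolding p tp2_def tp_def by blast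
    then show ?thesis using w by blast
  qed
  show "p \<in> Good arF arR T" unfolding Good_def using ct 1 2 3 by blast
qed

locale tmodel =
  fixes arF :: "'f \<Rightarrow> nat" and arR :: "'r \<Rightarrow> nat" and T :: "('f,'r,nat) fm set"
    and p :: "('f,'r,bool \<times> nat) fm set"
  assumes good: "p \<in> Good arF arR T" and wfT: "\<forall>\<sigma>\<in>T. wf_fm arF arR \<sigma>"
begin

lemma ct: "p \<in> complete_types arF arR T" using good unfolding Good_def by blast
lemma Gy: "\<exists>i. FEq (Var (False,i)) (Var (True,j)) \<in> p" using good unfolding Good_def by blast
lemma Gx: "\<exists>j. FEq (Var (False,i)) (Var (True,j)) \<in> p" using good unfolding Good_def by blast
lemma TV: "wf_fm arF arR \<phi> \<Longrightarrow> FEx v \<phi> \<in> p \<Longrightarrow> \<exists>w. w \<noteq> v \<and> FEx v (FConj (FEq (Var v) (Var w)) \<phi>) \<in> p"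
  using good unfolding Good_def by blast

lemmas CL = ct_closed[OF ct]

abbreviation "eqp v w \<equiv> FEq (Var v) (Var w) \<in> p"

lemma eqp_refl: "eqp v v"
  by (rule CL[of "{}"]) simp_all

lemma eqp_sym: assumes "eqp v w" shows "eqp w v"
  by (rule CL[of "{FEq (Var v) (Var w)}"]) (use assms in simp_all)

lemma eqp_trans: assumes "eqp u v" "eqp v w" shows "eqp u w"
  by (rule CL[of "{FEq (Var u) (Var v), FEq (Var v) (Var w)}"]) (use assms in simp_all)

definition rep :: "bool \<times> nat \<Rightarrow> nat" where
  "rep v = (LEAST i. eqp v (False, i))"

lemma rep_ex: "\<exists>i. eqp v (False, i)"
proof (cases v)
  case (Pair c k)
  show ?thesis
  proof (cases c)
    case True
    obtain i where "eqp (False,i) (True,k)" using Gy[of k] by blast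
    then have "eqp (True,k) (False,i)" by (rule eqp_sym)
    then show ?thesis using True Pair by auto
  next
    case False
    have "eqp (False,k) (False,k)" by (rule eqp_refl)
    then show ?thesis using False Pair by auto
  qed
qed

lemma rep_spec: "eqp v (False, rep v)"
  unfolding rep_def using rep_ex[of v] by (rule LeastI_ex)

lemma rep_eq_iff: "rep v = rep w \<longleftrightarrow> eqp v w"
proof
  assume "rep v = rep w"
  then show "eqp v w" using rep_spec[of v] rep_spec[of w] eqp_sym eqp_trans by metis
next
  assume e: "eqp v w"
  have "\<And>i. eqp v (False, i) \<longleftrightarrow> eqp w (False, i)" using e eqp_sym eqp_trans by metis
  then show "rep v = rep w" unfolding rep_def by simp
qed

lemma rep_False_rep: "rep (False, rep v) = rep v"
  using rep_eq_iff rep_spec eqp_sym by metis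

definition FT :: "'f \<Rightarrow> nat list \<Rightarrow> nat" where
  "FT f ns = rep (SOME w. FEq (Fn f (map (\<lambda>n. Var (False, n)) ns)) (Var w) \<in> p)"

definition RT :: "'r \<Rightarrow> nat list \<Rightarrow> bool" where
  "RT r ns = (FRel r (map (\<lambda>n. Var (False, n)) ns) \<in> p)"

definition TMod :: "(nat,'f,'r) struc" where
  "TMod = \<lparr>carr = range rep, fint = FT, rint = RT\<rparr>"

lemma carr_TMod[simp]: "carr TMod = range rep" and fint_TMod[simp]: "fint TMod = FT"
  and rint_TMod[simp]: "rint TMod = RT"
  by (simp_all add: TMod_def)

lemma struc_TMod: "is_struc arF TMod"
  unfolding is_struc_def by (auto simp: FT_def)

lemma term_ex:
  assumes wf: "wf_trm arF (t :: ('f, bool \<times> nat) trm)"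
  shows "\<exists>w. FEq t (Var w) \<in> p"
proof -
  define v where "v = fresh (fv_trm t)"
  have v: "v \<notin> fv_trm t" unfolding v_def by (rule fresh_notin[OF inf_V finite_fv_trm])
  have "FEx v (FEq (Var v) t) \<in> p"
  proof (rule CL[of "{}"])
    fix N :: "(nat,'f,'r) struc" and e :: "bool \<times> nat \<Rightarrow> nat"
    assume N: "is_model arF N T" "range e \<subseteq> carr N"
    have st: "is_struc arF N" using N unfolding is_model_def by blast
    have x: "evl N e t \<in> carr N" using evl_in_carr[OF st _ wf] N(2) by auto
    have "evl N (e(v := evl N e t)) t = evl N e t" by (rule evl_agree) (use v in auto)
    then show "sat N e (FEx v (FEq (Var v) t))" using x by (auto intro!: bexI[of _ "evl N e t"])
  qed (use wf in auto)
  then obtain w where w: "w \<noteq> v" "FEx v (FConj (FEq (Var v) (Var w)) (FEq (Var v) t)) \<in> p"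
    using TV[of "FEq (Var v) t" v] wf by auto
  have "FEq t (Var w) \<in> p"
  proof (rule CL[of "{FEx v (FConj (FEq (Var v) (Var w)) (FEq (Var v) t))}"])
    fix N :: "(nat,'f,'r) struc" and e :: "bool \<times> nat \<Rightarrow> nat"
    assume "\<forall>\<phi>\<in>{FEx v (FConj (FEq (Var v) (Var w)) (FEq (Var v) t))}. sat N e \<phi>"
    then obtain x where "x = e w" "x = evl N (e(v:=x)) t" using w(1) by auto
    moreover have "evl N (e(v := x)) t = evl N e t" for x by (rule evl_agree) (use v in auto)
    ultimately show "sat N e (FEq t (Var w))" by simp
  qed (use w wf in auto)
  then show ?thesis by blast
qed

definition W :: "(bool \<times> nat \<Rightarrow> bool \<times> nat) \<Rightarrow> ('f, bool \<times> nat) trm \<Rightarrow> bool \<times> nat" where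
  "W \<sigma> t = (SOME w. FEq (rent \<sigma> t) (Var w) \<in> p)"

lemma W_spec: "wf_trm arF t \<Longrightarrow> FEq (rent \<sigma> t) (Var (W \<sigma> t)) \<in> p"
  unfolding W_def by (rule someI_ex, rule term_ex) (simp add: wf_rent)

end

context tmodel begin

lemma term_truth:
  fixes \<sigma> :: "bool \<times> nat \<Rightarrow> bool \<times> nat" and t :: "('f, bool \<times> nat) trm"
  assumes "wf_trm arF t"
  shows "\<And>w. FEq (rent \<sigma> t) (Var w) \<in> p \<Longrightarrow> evl TMod (rep \<circ> \<sigma>) t = rep w"
  using assms
proof (induction t)
  case (Var u)
  then show ?case using rep_eq_iff by simp
next
  case (Fn f ts)
  have wfts: "\<forall>t\<in>set ts. wf_trm arF t" and len: "length ts = arF f" using Fn.prems by auto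
  have ih: "evl TMod (rep \<circ> \<sigma>) t = rep (W \<sigma> t)" if "t \<in> set ts" for t
    using Fn.IH[OF that W_spec] wfts that by blast
  define A where "A = FEq (Fn f (map (\<lambda>t. Var (False, rep (W \<sigma> t))) ts))"
  obtain w0 where w0: "FEq (Fn f (map (\<lambda>n. Var (False, n)) (map (rep \<circ> W \<sigma>) ts))) (Var w0) \<in> p"
    using term_ex[of "Fn f (map (\<lambda>n. Var (False, n)) (map (rep \<circ> W \<sigma>) ts))"] len by auto
  have m: "map (evl TMod (rep \<circ> \<sigma>)) ts = map (rep \<circ> W \<sigma>) ts" using ih by simp
  have ev: "evl TMod (rep \<circ> \<sigma>) (Fn f ts) = FT f (map (rep \<circ> W \<sigma>) ts)"
    by (simp only: evl.simps fint_TMod m)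
  also have "\<dots> = rep w0"
  proof -
    let ?P = "\<lambda>w. FEq (Fn f (map (\<lambda>n. Var (False, n)) (map (rep \<circ> W \<sigma>) ts))) (Var w) \<in> p"
    have "?P (SOME w. ?P w)" using w0 by (rule someI)
    then have "eqp (SOME w. ?P w) w0"
      by (intro CL[of "{FEq (Fn f (map (\<lambda>n. Var (False, n)) (map (rep \<circ> W \<sigma>) ts))) (Var (SOME w. ?P w)),
                       FEq (Fn f (map (\<lambda>n. Var (False, n)) (map (rep \<circ> W \<sigma>) ts))) (Var w0)}"])
         (use w0 in simp_all)
    then show ?thesis unfolding FT_def using rep_eq_iff by simp
  qed
  also have "\<dots> = rep w"
  proof -
    let ?C = "(\<lambda>t. FEq (rent \<sigma> t) (Var (W \<sigma> t))) ` set ts"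
    let ?D = "(\<lambda>t. FEq (Var (W \<sigma> t)) (Var (False, rep (W \<sigma> t)))) ` set ts"
    let ?A = "FEq (Fn f (map (\<lambda>n. Var (False, n)) (map (rep \<circ> W \<sigma>) ts))) (Var w0)"
    let ?B = "FEq (rent \<sigma> (Fn f ts)) (Var w)"
    have C: "?C \<subseteq> p" using W_spec wfts by auto
    have D: "?D \<subseteq> p" by (rule image_subsetI) (rule rep_spec)
    have "eqp w0 w"
    proof (rule CL[of "insert ?A (insert ?B (?C \<union> ?D))"])
      show "insert ?A (insert ?B (?C \<union> ?D)) \<subseteq> p" using w0 Fn.prems C D by auto
    next
      fix N :: "(nat,'f,'r) struc" and e :: "bool \<times> nat \<Rightarrow> nat"
      assume sat: "\<forall>\<phi>\<in>insert ?A (insert ?B (?C \<union> ?D)). sat N e \<phi>"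
      have c: "evl N e (rent \<sigma> t) = e (W \<sigma> t)" if "t \<in> set ts" for t
      proof -
        have "FEq (rent \<sigma> t) (Var (W \<sigma> t)) \<in> insert ?A (insert ?B (?C \<union> ?D))"
          by (intro insertI2 UnI1 imageI that)
        then have "sat N e (FEq (rent \<sigma> t) (Var (W \<sigma> t)))" by (rule bspec[OF sat])
        then show ?thesis by simp
      qed
      have d: "e (W \<sigma> t) = e (False, rep (W \<sigma> t))" if "t \<in> set ts" for t
      proof -
        have "FEq (Var (W \<sigma> t)) (Var (False, rep (W \<sigma> t))) \<in> insert ?A (insert ?B (?C \<union> ?D))"
          by (intro insertI2 UnI2 imageI that)
        then have "sat N e (FEq (Var (W \<sigma> t)) (Var (False, rep (W \<sigma> t))))" by (rule bspec[OF sat])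
        then show ?thesis by simp
      qed
      have m: "map (\<lambda>t. evl N e (rent \<sigma> t)) ts = map (\<lambda>t. e (False, rep (W \<sigma> t))) ts"
        using c d by simp
      have s1: "fint N f (map (\<lambda>t. e (False, rep (W \<sigma> t))) ts) = e w0"
        and s2: "fint N f (map (\<lambda>t. evl N e (rent \<sigma> t)) ts) = e w"
        using sat by (simp_all add: comp_def)
      from m s1 s2 have "e w = e w0" by metis
      then show "sat N e (FEq (Var w0) (Var w))" by simp
    qed auto
    then show ?thesis using rep_eq_iff by simp
  qed
  finally show ?case .
qed

lemma term_val:
  fixes \<sigma> :: "bool \<times> nat \<Rightarrow> bool \<times> nat" and t :: "('f, bool \<times> nat) trm"
  assumes "wf_trm arF t"
  shows "evl TMod (rep \<circ> \<sigma>) t = rep (W \<sigma> t)"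
  using term_truth[OF assms W_spec[OF assms]] .

lemma CD_sem:
  fixes \<sigma> :: "bool \<times> nat \<Rightarrow> bool \<times> nat" and ts :: "('f, bool \<times> nat) trm list"
    and N :: "(nat,'f,'r) struc" and e :: "bool \<times> nat \<Rightarrow> nat"
  assumes sat: "\<forall>\<phi>\<in>(\<lambda>t. FEq (rent \<sigma> t) (Var (W \<sigma> t))) ` set ts \<union>
                 (\<lambda>t. FEq (Var (W \<sigma> t)) (Var (False, rep (W \<sigma> t)))) ` set ts. sat N e \<phi>"
  shows "map (\<lambda>t. evl N e (rent \<sigma> t)) ts = map (\<lambda>t. e (False, rep (W \<sigma> t))) ts"
proof -
  have "evl N e (rent \<sigma> t) = e (False, rep (W \<sigma> t))" if t: "t \<in> set ts" for t
  proof -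
    have "sat N e (FEq (rent \<sigma> t) (Var (W \<sigma> t)))" by (rule bspec[OF sat]) (intro UnI1 imageI t)
    moreover have "sat N e (FEq (Var (W \<sigma> t)) (Var (False, rep (W \<sigma> t))))" by (rule bspec[OF sat]) (intro UnI2 imageI t)
    ultimately show ?thesis by simp
  qed
  then show ?thesis by simp
qed

lemma CD_sub:
  fixes \<sigma> :: "bool \<times> nat \<Rightarrow> bool \<times> nat" and ts :: "('f, bool \<times> nat) trm list"
  assumes "\<forall>t\<in>set ts. wf_trm arF t"
  shows "(\<lambda>t. FEq (rent \<sigma> t) (Var (W \<sigma> t))) ` set ts \<union>
                 (\<lambda>t. FEq (Var (W \<sigma> t)) (Var (False, rep (W \<sigma> t)))) ` set ts \<subseteq> p"
proof -
  have "(\<lambda>t. FEq (rent \<sigma> t) (Var (W \<sigma> t))) ` set ts \<subseteq> p" using W_spec assms by auto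
  moreover have "(\<lambda>t. FEq (Var (W \<sigma> t)) (Var (False, rep (W \<sigma> t)))) ` set ts \<subseteq> p"
    by (rule image_subsetI) (rule rep_spec)
  ultimately show ?thesis by blast
qed

lemma truth:
  fixes \<phi> :: "('f,'r,bool \<times> nat) fm"
  assumes "wf_fm arF arR \<phi>"
  shows "\<And>\<sigma>. sat TMod (rep \<circ> \<sigma>) \<phi> \<longleftrightarrow> subst \<sigma> \<phi> \<in> p"
  using assms
proof (induction \<phi>)
  case FBot
  then show ?case using ct_FBot[OF ct] by simp
next
  case (FEq s t)
  have wf: "wf_trm arF s" "wf_trm arF t" using FEq by auto
  let ?ws = "W \<sigma> s" and ?wt = "W \<sigma> t"
  have s1: "FEq (rent \<sigma> s) (Var ?ws) \<in> p" and t1: "FEq (rent \<sigma> t) (Var ?wt) \<in> p"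
    using W_spec wf by auto
  have "sat TMod (rep \<circ> \<sigma>) (FEq s t) \<longleftrightarrow> eqp ?ws ?wt"
    using term_val[OF wf(1)] term_val[OF wf(2)] rep_eq_iff by simp
  also have "\<dots> \<longleftrightarrow> FEq (rent \<sigma> s) (rent \<sigma> t) \<in> p"
  proof
    assume ee: "eqp ?ws ?wt"
    show "FEq (rent \<sigma> s) (rent \<sigma> t) \<in> p"
      by (rule CL[of "{FEq (rent \<sigma> s) (Var ?ws), FEq (rent \<sigma> t) (Var ?wt), FEq (Var ?ws) (Var ?wt)}"])
        (use ee s1 t1 wf in \<open>simp_all add: wf_rent\<close>)
  next
    assume ee: "FEq (rent \<sigma> s) (rent \<sigma> t) \<in> p"
    show "eqp ?ws ?wt"
      by (rule CL[of "{FEq (rent \<sigma> s) (Var ?ws), FEq (rent \<sigma> t) (Var ?wt), FEq (rent \<sigma> s) (rent \<sigma> t)}"])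
        (use ee s1 t1 wf in \<open>simp_all add: wf_rent\<close>)
  qed
  finally show ?case by (simp only: subst.simps)
next
  case (FRel r ts)
  have wf: "\<forall>t\<in>set ts. wf_trm arF t" and len: "length ts = arR r" using FRel by auto
  let ?CD = "(\<lambda>t. FEq (rent \<sigma> t) (Var (W \<sigma> t))) ` set ts \<union>
                 (\<lambda>t. FEq (Var (W \<sigma> t)) (Var (False, rep (W \<sigma> t)))) ` set ts"
  let ?R0 = "FRel r (map (\<lambda>t. Var (False, rep (W \<sigma> t))) ts)"
  let ?R1 = "FRel r (map (rent \<sigma>) ts)"
  have CD: "?CD \<subseteq> p" by (rule CD_sub[OF wf])
  have fin: "finite (insert ?R0 ?CD)" "finite (insert ?R1 ?CD)" by auto
  have wf01: "wf_fm arF arR ?R0" "wf_fm arF arR ?R1" using len wf by (auto simp: wf_rent)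
  have m: "map (evl TMod (rep \<circ> \<sigma>)) ts = map (rep \<circ> W \<sigma>) ts" using term_val wf by simp
  have "sat TMod (rep \<circ> \<sigma>) (FRel r ts) \<longleftrightarrow> ?R0 \<in> p"
    by (simp only: sat.simps rint_TMod m) (simp add: RT_def comp_def)
  also have "\<dots> \<longleftrightarrow> ?R1 \<in> p"
  proof
    assume "?R0 \<in> p"
    show "?R1 \<in> p"
    proof (rule CL[OF fin(1) _ wf01(2)])
      show "insert ?R0 ?CD \<subseteq> p" using CD \<open>?R0 \<in> p\<close> by blast
    next
      fix N :: "(nat,'f,'r) struc" and e :: "bool \<times> nat \<Rightarrow> nat"
      assume sat: "\<forall>\<phi>\<in>insert ?R0 ?CD. sat N e \<phi>"
      then have "map (\<lambda>t. evl N e (rent \<sigma> t)) ts = map (\<lambda>t. e (False, rep (W \<sigma> t))) ts"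
        by (intro CD_sem) blast
      moreover have "sat N e ?R0" using sat by blast
      ultimately show "sat N e ?R1" by (simp add: comp_def del: map_eq_conv)
    qed
  next
    assume "?R1 \<in> p"
    show "?R0 \<in> p"
    proof (rule CL[OF fin(2) _ wf01(1)])
      show "insert ?R1 ?CD \<subseteq> p" using CD \<open>?R1 \<in> p\<close> by blast
    next
      fix N :: "(nat,'f,'r) struc" and e :: "bool \<times> nat \<Rightarrow> nat"
      assume sat: "\<forall>\<phi>\<in>insert ?R1 ?CD. sat N e \<phi>"
      then have "map (\<lambda>t. evl N e (rent \<sigma> t)) ts = map (\<lambda>t. e (False, rep (W \<sigma> t))) ts"
        by (intro CD_sem) blast
      moreover have "sat N e ?R1" using sat by blast
      ultimately show "sat N e ?R0" by (simp add: comp_def del: map_eq_conv)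
    qed
  qed
  finally show ?case by (simp only: subst.simps)
next
  case (FNeg \<phi>)
  have wf: "wf_fm arF arR (subst \<sigma> \<phi>)" using FNeg by (simp add: wf_fm_subst)
  show ?case using FNeg ct_neg[OF ct wf] by simp
next
  case (FConj \<phi> \<psi>)
  have wf: "wf_fm arF arR (subst \<sigma> \<phi>)" "wf_fm arF arR (subst \<sigma> \<psi>)" using FConj by (auto simp: wf_fm_subst)
  show ?case using FConj ct_conj[OF ct wf] by simp
next
  case (FEx v \<phi>)
  have wf: "wf_fm arF arR \<phi>" using FEx by simp
  have upd: "(rep \<circ> \<sigma>)(v := rep w) = rep \<circ> \<sigma>(v := w)" for w by (auto simp: fun_eq_iff)
  have "sat TMod (rep \<circ> \<sigma>) (FEx v \<phi>) \<longleftrightarrow> (\<exists>w. sat TMod ((rep \<circ> \<sigma>)(v := rep w)) \<phi>)"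
    by auto
  also have "\<dots> \<longleftrightarrow> (\<exists>w. subst (\<sigma>(v := w)) \<phi> \<in> p)"
    unfolding upd using FEx.IH[OF wf] by blast
  also have "\<dots> \<longleftrightarrow> subst \<sigma> (FEx v \<phi>) \<in> p"
  proof
    assume "\<exists>w. subst (\<sigma>(v := w)) \<phi> \<in> p"
    then obtain w where w: "subst (\<sigma>(v := w)) \<phi> \<in> p" by blast
    show "subst \<sigma> (FEx v \<phi>) \<in> p"
    proof (rule CL[of "{subst (\<sigma>(v := w)) \<phi>}"])
      fix N :: "(nat,'f,'r) struc" and e :: "bool \<times> nat \<Rightarrow> nat"
      assume N: "is_model arF N T" "range e \<subseteq> carr N" "\<forall>\<phi>\<in>{subst (\<sigma>(v := w)) \<phi>}. sat N e \<phi>"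
      then have "sat N (e \<circ> \<sigma>(v := w)) \<phi>" by (simp add: sat_subst[OF inf_V])
      moreover have "e \<circ> \<sigma>(v := w) = (e \<circ> \<sigma>)(v := e w)" by (auto simp: fun_eq_iff)
      moreover have "e w \<in> carr N" using N(2) by auto
      ultimately have "sat N (e \<circ> \<sigma>) (FEx v \<phi>)" by auto
      then show "sat N e (subst \<sigma> (FEx v \<phi>))" by (simp only: sat_subst[OF inf_V])
    qed (use w wf in \<open>auto simp: wf_fm_subst\<close>)
  next
    assume a: "subst \<sigma> (FEx v \<phi>) \<in> p"
    define u where "u = fresh (\<sigma> ` (fv_fm \<phi> - {v}))"
    have u: "u \<notin> \<sigma> ` (fv_fm \<phi> - {v})"
      unfolding u_def by (rule fresh_notin[OF inf_V]) (simp add: finite_fv_fm)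
    let ?\<psi> = "subst (\<sigma>(v:=u)) \<phi>"
    have "FEx u ?\<psi> \<in> p" using a by (simp add: u_def Let_def)
    then obtain w where w: "w \<noteq> u" "FEx u (FConj (FEq (Var u) (Var w)) ?\<psi>) \<in> p"
      using TV[of ?\<psi> u] wf by (auto simp: wf_fm_subst)
    have "subst (\<sigma>(v := w)) \<phi> \<in> p"
    proof (rule CL[of "{FEx u (FConj (FEq (Var u) (Var w)) ?\<psi>)}"])
      fix N :: "(nat,'f,'r) struc" and e :: "bool \<times> nat \<Rightarrow> nat"
      assume N: "is_model arF N T" "range e \<subseteq> carr N" "\<forall>\<phi>\<in>{FEx u (FConj (FEq (Var u) (Var w)) ?\<psi>)}. sat N e \<phi>"
      then obtain x where x: "x = e w" "sat N (e(u:=x)) ?\<psi>" using w(1) by auto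
      then have "sat N (e(u:=x) \<circ> \<sigma>(v:=u)) \<phi>" by (simp add: sat_subst[OF inf_V])
      moreover have "sat N (e(u:=x) \<circ> \<sigma>(v:=u)) \<phi> = sat N (e \<circ> \<sigma>(v:=w)) \<phi>"
        by (rule sat_agree) (use u x in auto)
      ultimately show "sat N e (subst (\<sigma>(v := w)) \<phi>)" by (simp add: sat_subst[OF inf_V])
    qed (use w wf in \<open>auto simp: wf_fm_subst\<close>)
    then show "\<exists>w. subst (\<sigma>(v := w)) \<phi> \<in> p" by blast
  qed
  finally show ?case .
qed

lemma TMod_model: "is_model arF TMod T"
  unfolding is_model_def
proof (intro conjI ballI allI impI)
  show "is_struc arF TMod" by (rule struc_TMod)
next
  fix \<sigma>0 and e :: "nat \<Rightarrow> nat" assume \<sigma>0: "\<sigma>0 \<in> T" and e: "range e \<subseteq> carr TMod"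
  define \<iota> :: "nat \<Rightarrow> bool \<times> nat" where "\<iota> n = (False, n)" for n
  have inj: "inj \<iota>" unfolding \<iota>_def by (auto intro: injI)
  define \<tau> :: "nat \<Rightarrow> bool \<times> nat" where "\<tau> n = (SOME v. rep v = e n)" for n
  have \<tau>: "rep (\<tau> n) = e n" for n
  proof -
    have "e n \<in> range rep" using e by auto
    then show ?thesis unfolding \<tau>_def by (metis (mono_tags) rangeE someI_ex)
  qed
  define \<tau>' where "\<tau>' v = \<tau> (snd v)" for v :: "bool \<times> nat"
  have comp: "\<tau>' \<circ> \<iota> = \<tau>" by (auto simp: \<tau>'_def \<iota>_def fun_eq_iff)
  let ?\<chi> = "subst \<tau>' (renf \<iota> \<sigma>0)"
  have wf0: "wf_fm arF arR \<sigma>0" using wfT \<sigma>0 by blast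
  have "?\<chi> \<in> p"
  proof (rule CL[of "{}"])
    fix N :: "(nat,'f,'r) struc" and e' :: "bool \<times> nat \<Rightarrow> nat"
    assume N: "is_model arF N T" "range e' \<subseteq> carr N"
    have "range (e' \<circ> \<tau>' \<circ> \<iota>) \<subseteq> carr N" using N(2) by auto
    then have "sat N (e' \<circ> \<tau>' \<circ> \<iota>) \<sigma>0" using N(1) \<sigma>0 unfolding is_model_def by blast
    then show "sat N e' ?\<chi>" by (simp add: sat_subst[OF inf_V] sat_renf[OF inj] comp_assoc)
  qed (simp_all add: wf_fm_subst wf_renf wf0)
  then have "sat TMod (rep \<circ> \<tau>') (renf \<iota> \<sigma>0)"
    using truth[of "renf \<iota> \<sigma>0" \<tau>'] by (simp add: wf_renf wf0)
  then have "sat TMod (rep \<circ> \<tau>' \<circ> \<iota>) \<sigma>0" by (simp add: sat_renf[OF inj])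
  moreover have "rep \<circ> \<tau>' \<circ> \<iota> = e" using \<tau> comp by (auto simp: fun_eq_iff \<tau>'_def \<iota>_def)
  ultimately show "sat TMod e \<sigma>0" by simp
qed

lemma subst_id_iff:
  assumes wf: "wf_fm arF arR \<phi>"
  shows "subst id \<phi> \<in> p \<longleftrightarrow> \<phi> \<in> p"
proof
  assume a: "subst id \<phi> \<in> p"
  show "\<phi> \<in> p" by (rule CL[of "{subst id \<phi>}"]) (simp_all add: a wf sat_subst[OF inf_V])
next
  assume a: "\<phi> \<in> p"
  show "subst id \<phi> \<in> p" by (rule CL[of "{\<phi>}"]) (simp_all add: a wf wf_fm_subst sat_subst[OF inf_V])
qed

lemma p_G0: "p \<in> G0 arF arR T"
proof -
  define a where "a i = rep (False, i)" for i
  define b where "b j = rep (True, j)" for j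
  have ra: "range a = range rep"
  proof
    show "range a \<subseteq> range rep" unfolding a_def by auto
    show "range rep \<subseteq> range a"
    proof
      fix x assume "x \<in> range rep"
      then obtain v where "x = rep v" by blast
      then have "x = a (rep v)" unfolding a_def using rep_False_rep by simp
      then show "x \<in> range a" by blast
    qed
  qed
  have rb: "range b = range rep"
  proof
    show "range b \<subseteq> range rep" unfolding b_def by auto
    show "range rep \<subseteq> range b"
    proof
      fix x assume "x \<in> range rep"
      then obtain v where x: "x = rep v" by blast
      obtain j where "eqp (False, rep v) (True, j)" using Gx by blast
      then have "rep (False, rep v) = rep (True, j)" using rep_eq_iff by simp
      then have "x = b j" unfolding b_def using rep_False_rep x by simp
      then show "x \<in> range b" by blast
    qed
  qed
  have prr: "pr a b = rep" by (auto simp: fun_eq_iff pr_def a_def b_def)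
  have "tp2 arF arR TMod a b = p"
  proof -
    have "tp2 arF arR TMod a b = {\<phi>. wf_fm arF arR \<phi> \<and> sat TMod (rep \<circ> id) \<phi>}"
      unfolding tp2_def tp_def prr by simp
    also have "\<dots> = {\<phi>. wf_fm arF arR \<phi> \<and> \<phi> \<in> p}"
      using truth subst_id_iff by blast
    also have "\<dots> = p" using ct_wf[OF ct] by blast
    finally show ?thesis .
  qed
  then have "\<exists>(M :: (nat,'f,'r) struc) a b. p = tp2 arF arR M a b \<and> is_model arF M T \<and> range a = carr M \<and> range b = carr M"
    using TMod_model ra rb by (intro exI[of _ TMod] exI[of _ a] exI[of _ b]) auto
  then show ?thesis unfolding G0_def enum_def by blast
qed

end

lemma G0E:
  fixes arF :: "'f \<Rightarrow> nat" and arR :: "'r \<Rightarrow> nat"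
  assumes "g \<in> G0 arF arR T"
  obtains M :: "(nat,'f,'r) struc" and a b where "is_model arF M T" "enum M a" "enum M b" "g = tp2 arF arR M a b"
  using assms unfolding G0_def by blast

lemma G0I:
  fixes M :: "(nat,'f,'r) struc"
  assumes "is_model arF M T" "enum M a" "enum M b"
  shows "tp2 arF arR M a b \<in> G0 arF arR T"
  using assms unfolding G0_def by blast

lemma model_struc: "is_model arF M T \<Longrightarrow> is_struc arF M"
  unfolding is_model_def by blast

lemma enum_pr: "enum M a \<Longrightarrow> enum M b \<Longrightarrow> range (pr a b) = carr M"
  unfolding enum_def by (simp add: range_pr)

lemma tp2_iso:
  fixes M :: "(nat,'f,'r) struc" and M' :: "(nat,'f,'r) struc"
  assumes "is_model arF M T" "enum M a" "enum M b" "is_model arF M' T" "enum M' a'" "enum M' b'"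
    and "tp2 arF arR M a b = tp2 arF arR M' a' b'"
  shows "\<exists>h. iso arF arR M M' h \<and> (\<forall>i. h (a i) = a' i) \<and> (\<forall>i. h (b i) = b' i)"
proof -
  obtain h where h: "iso arF arR M M' h" "\<forall>v. h (pr a b v) = pr a' b' v"
    using tp_iso[OF model_struc[OF assms(1)] model_struc[OF assms(4)] enum_pr[OF assms(2,3)] enum_pr[OF assms(5,6)]]
      assms(7) unfolding tp2_def by blast
  have "h (a i) = a' i" for i using h(2)[rule_format, of "(False,i)"] by (simp add: pr_def)
  moreover have "h (b i) = b' i" for i using h(2)[rule_format, of "(True,i)"] by (simp add: pr_def)
  ultimately show ?thesis using h(1) by blast
qed

lemma iso_tp2:
  assumes "is_struc arF M" "iso arF arR M N h" "enum M a" "enum M b"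
  shows "tp2 arF arR N (h \<circ> a) (h \<circ> b) = tp2 arF arR M a b"
proof -
  have "pr (h \<circ> a) (h \<circ> b) = h \<circ> pr a b" by (auto simp: fun_eq_iff pr_def)
  moreover have "\<forall>v. pr a b v \<in> carr M" using enum_pr[OF assms(3,4)] by (metis rangeI)
  ultimately show ?thesis unfolding tp2_def using iso_tp[OF assms(1,2)] by metis
qed

lemma iso_enum: "iso arF arR M N h \<Longrightarrow> enum M a \<Longrightarrow> enum N (h \<circ> a)"
  unfolding iso_def enum_def bij_betw_def by (metis image_comp)

lemma G0_inv_eq:
  fixes M :: "(nat,'f,'r) struc"
  assumes M: "is_model arF M T" "enum M a" "enum M b"
  shows "G0_inv arF arR T (tp2 arF arR M a b) = tp2 arF arR M b a"
  unfolding G0_inv_def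
proof (rule the_equality)
  show "\<exists>(M' :: (nat,'f,'r) struc) a' b'. is_model arF M' T \<and> enum M' a' \<and> enum M' b' \<and>
     tp2 arF arR M a b = tp2 arF arR M' a' b' \<and> tp2 arF arR M b a = tp2 arF arR M' b' a'"
    using M by blast
next
  fix k assume "\<exists>(M' :: (nat,'f,'r) struc) a' b'. is_model arF M' T \<and> enum M' a' \<and> enum M' b' \<and>
     tp2 arF arR M a b = tp2 arF arR M' a' b' \<and> k = tp2 arF arR M' b' a'"
  then obtain M' :: "(nat,'f,'r) struc" and a' b' where M': "is_model arF M' T" "enum M' a'" "enum M' b'"
    "tp2 arF arR M a b = tp2 arF arR M' a' b'" "k = tp2 arF arR M' b' a'" by blast
  obtain h where h: "iso arF arR M' M h" "\<forall>i. h (a' i) = a i" "\<forall>i. h (b' i) = b i"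
    using tp2_iso[OF M'(1-3) M M'(4)[symmetric]] by blast
  have "h \<circ> a' = a" "h \<circ> b' = b" using h by (auto simp: fun_eq_iff)
  then show "k = tp2 arF arR M b a" using iso_tp2[OF model_struc[OF M'(1)] h(1) M'(3) M'(2)] M'(5) by simp
qed

lemma G0_mul_eq:
  fixes M :: "(nat,'f,'r) struc"
  assumes M: "is_model arF M T" "enum M a" "enum M b" "enum M c"
  shows "G0_mul arF arR T (tp2 arF arR M a b) (tp2 arF arR M b c) = tp2 arF arR M a c"
  unfolding G0_mul_def
proof (rule the_equality)
  show "\<exists>(M' :: (nat,'f,'r) struc) a' b' c'. is_model arF M' T \<and> enum M' a' \<and> enum M' b' \<and> enum M' c' \<and>
     tp2 arF arR M a b = tp2 arF arR M' a' b' \<and> tp2 arF arR M b c = tp2 arF arR M' b' c' \<and>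
     tp2 arF arR M a c = tp2 arF arR M' a' c'"
    using M by blast
next
  fix k assume "\<exists>(M' :: (nat,'f,'r) struc) a' b' c'. is_model arF M' T \<and> enum M' a' \<and> enum M' b' \<and> enum M' c' \<and>
     tp2 arF arR M a b = tp2 arF arR M' a' b' \<and> tp2 arF arR M b c = tp2 arF arR M' b' c' \<and>
     k = tp2 arF arR M' a' c'"
  then obtain M' :: "(nat,'f,'r) struc" and a' b' c' where M': "is_model arF M' T" "enum M' a'" "enum M' b'" "enum M' c'"
    "tp2 arF arR M a b = tp2 arF arR M' a' b'" "tp2 arF arR M b c = tp2 arF arR M' b' c'"
    "k = tp2 arF arR M' a' c'" by blast
  obtain h1 where h1: "iso arF arR M' M h1" "\<forall>i. h1 (a' i) = a i" "\<forall>i. h1 (b' i) = b i"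
    using tp2_iso[OF M'(1-3) M(1-3) M'(5)[symmetric]] by blast
  obtain h2 where h2: "iso arF arR M' M h2" "\<forall>i. h2 (b' i) = b i" "\<forall>i. h2 (c' i) = c i"
    using tp2_iso[OF M'(1) M'(3,4) M(1) M(3,4) M'(6)[symmetric]] by blast
  have "h1 x = h2 x" if xM: "x \<in> carr M'" for x
  proof -
    have "x \<in> range b'" using xM M'(3) unfolding enum_def by simp
    then obtain i where "x = b' i" by blast
    then show ?thesis using h1 h2 by simp
  qed
  moreover have "c' i \<in> carr M'" for i using M'(4) unfolding enum_def by blast
  ultimately have "h1 \<circ> c' = c" using h2 by (auto simp: fun_eq_iff)
  moreover have "h1 \<circ> a' = a" using h1 by (auto simp: fun_eq_iff)
  ultimately show "k = tp2 arF arR M a c" using iso_tp2[OF model_struc[OF M'(1)] h1(1) M'(2) M'(4)] M'(7) by simp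
qed

lemma tp_eq_iso_model:
  fixes M :: "(nat,'f,'r) struc" and M' :: "(nat,'f,'r) struc"
  assumes "is_model arF M T" "enum M b" "is_model arF M' T" "enum M' b'"
    and "(tp arF arR M b :: ('f,'r,nat) fm set) = tp arF arR M' b'"
  shows "\<exists>h. iso arF arR M M' h \<and> h \<circ> b = b'"
  using tp_iso[OF model_struc[OF assms(1)] model_struc[OF assms(3)]] assms unfolding enum_def
  by (auto simp: fun_eq_iff)

lemma cmp_right:
  fixes M :: "(nat,'f,'r) struc"
  assumes M: "is_model arF M T" "enum M a" "enum M b"
    and cmp: "G0_composable arF arR T (tp2 arF arR M a b) k"
  shows "\<exists>c. enum M c \<and> k = tp2 arF arR M b c"
proof -
  obtain M1 :: "(nat,'f,'r) struc" and a1 b1 and M2 :: "(nat,'f,'r) struc" and b2 c2 where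
    X: "is_model arF M1 T" "enum M1 a1" "enum M1 b1" "is_model arF M2 T" "enum M2 b2" "enum M2 c2"
    "tp2 arF arR M a b = tp2 arF arR M1 a1 b1" "k = tp2 arF arR M2 b2 c2"
    "(tp arF arR M1 b1 :: ('f,'r,nat) fm set) = tp arF arR M2 b2"
    using cmp unfolding G0_composable_def by blast
  obtain h where h: "iso arF arR M1 M h" "\<forall>i. h (b1 i) = b i"
    using tp2_iso[OF X(1-3) M X(7)[symmetric]] by blast
  have "h \<circ> b1 = b" using h by (auto simp: fun_eq_iff)
  then have "(tp arF arR M b :: ('f,'r,nat) fm set) = tp arF arR M1 b1"
    using iso_tp[OF model_struc[OF X(1)] h(1), of b1] X(3) unfolding enum_def by auto
  then have "(tp arF arR M2 b2 :: ('f,'r,nat) fm set) = tp arF arR M b" using X(9) by simp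
  then obtain g where g: "iso arF arR M2 M g" "g \<circ> b2 = b"
    using tp_eq_iso_model[OF X(4,5) M(1,3)] by blast
  have "k = tp2 arF arR M (g \<circ> b2) (g \<circ> c2)"
    using iso_tp2[OF model_struc[OF X(4)] g(1) X(5,6)] X(8) by simp
  then show ?thesis using g iso_enum[OF g(1) X(6)] by auto
qed

lemma cmp_left:
  fixes M :: "(nat,'f,'r) struc"
  assumes M: "is_model arF M T" "enum M b" "enum M c"
    and cmp: "G0_composable arF arR T g (tp2 arF arR M b c)"
  shows "\<exists>a. enum M a \<and> g = tp2 arF arR M a b"
proof -
  obtain M1 :: "(nat,'f,'r) struc" and a1 b1 and M2 :: "(nat,'f,'r) struc" and b2 c2 where
    X: "is_model arF M1 T" "enum M1 a1" "enum M1 b1" "is_model arF M2 T" "enum M2 b2" "enum M2 c2"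
    "g = tp2 arF arR M1 a1 b1" "tp2 arF arR M b c = tp2 arF arR M2 b2 c2"
    "(tp arF arR M1 b1 :: ('f,'r,nat) fm set) = tp arF arR M2 b2"
    using cmp unfolding G0_composable_def by blast
  obtain h where h: "iso arF arR M2 M h" "\<forall>i. h (b2 i) = b i"
    using tp2_iso[OF X(4-6) M X(8)[symmetric]] by blast
  have "h \<circ> b2 = b" using h by (auto simp: fun_eq_iff)
  then have "(tp arF arR M b :: ('f,'r,nat) fm set) = tp arF arR M2 b2"
    using iso_tp[OF model_struc[OF X(4)] h(1), of b2] X(5) unfolding enum_def by auto
  then have "(tp arF arR M1 b1 :: ('f,'r,nat) fm set) = tp arF arR M b" using X(9) by simp
  then obtain k where k: "iso arF arR M1 M k" "k \<circ> b1 = b"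
    using tp_eq_iso_model[OF X(1,3) M(1,2)] by blast
  have "g = tp2 arF arR M (k \<circ> a1) (k \<circ> b1)"
    using iso_tp2[OF model_struc[OF X(1)] k(1) X(2,3)] X(7) by simp
  then show ?thesis using k iso_enum[OF k(1) X(2)] by auto
qed

lemma cmp_intro:
  fixes M :: "(nat,'f,'r) struc"
  assumes "is_model arF M T" "enum M a" "enum M b" "enum M c"
  shows "G0_composable arF arR T (tp2 arF arR M a b) (tp2 arF arR M b c)"
  unfolding G0_composable_def using assms by blast

context
  fixes arF :: "'f \<Rightarrow> nat" and arR :: "'r \<Rightarrow> nat" and T :: "('f,'r,nat) fm set"
begin

abbreviation "GG \<equiv> G0 arF arR T"
abbreviation "iv \<equiv> G0_inv arF arR T"
abbreviation "mul \<equiv> G0_mul arF arR T"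
abbreviation "cmp \<equiv> G0_composable arF arR T"

lemma s_eq:
  fixes M :: "(nat,'f,'r) struc"
  assumes "is_model arF M T" "enum M a" "enum M b"
  shows "mul (iv (tp2 arF arR M a b)) (tp2 arF arR M a b) = tp2 arF arR M b b"
  using G0_inv_eq[OF assms] G0_mul_eq[OF assms(1,3,2,3)] by simp

lemma t_eq:
  fixes M :: "(nat,'f,'r) struc"
  assumes "is_model arF M T" "enum M a" "enum M b"
  shows "mul (tp2 arF arR M a b) (iv (tp2 arF arR M a b)) = tp2 arF arR M a a"
  using G0_inv_eq[OF assms] G0_mul_eq[OF assms(1,2,3,2)] by simp

lemma alg1: "g \<in> GG \<Longrightarrow> iv g \<in> GG \<and> iv (iv g) = g"
  by (erule G0E) (simp add: G0_inv_eq G0I)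

lemma alg2: "g \<in> GG \<Longrightarrow> h \<in> GG \<Longrightarrow> cmp g h \<Longrightarrow> mul g h \<in> GG"
proof (erule G0E)
  fix M :: "(nat,'f,'r) struc" and a b
  assume M: "is_model arF M T" "enum M a" "enum M b" "g = tp2 arF arR M a b" and "cmp g h"
  then obtain c where c: "enum M c" "h = tp2 arF arR M b c" using cmp_right by blast
  have "mul g h = tp2 arF arR M a c" using G0_mul_eq[OF M(1-3) c(1)] M(4) c(2) by simp
  then show "mul g h \<in> GG" using G0I[OF M(1,2) c(1)] by simp
qed

lemma alg3: "g \<in> GG \<Longrightarrow> cmp (iv g) g \<and> cmp g (iv g)"
  by (erule G0E) (simp add: G0_inv_eq cmp_intro)

lemma alg4:
  assumes "g \<in> GG" "h \<in> GG"
  shows "cmp g h \<longleftrightarrow> mul (iv g) g = mul h (iv h)"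
proof -
  obtain M :: "(nat,'f,'r) struc" and a b where M: "is_model arF M T" "enum M a" "enum M b" "g = tp2 arF arR M a b"
    using assms(1) by (rule G0E)
  obtain M' :: "(nat,'f,'r) struc" and b' c' where M': "is_model arF M' T" "enum M' b'" "enum M' c'" "h = tp2 arF arR M' b' c'"
    using assms(2) by (rule G0E)
  have sg: "mul (iv g) g = tp2 arF arR M b b" using s_eq M by simp
  have th: "mul h (iv h) = tp2 arF arR M' b' b'" using t_eq M' by simp
  show ?thesis
  proof
    assume "cmp g h"
    then obtain c where c: "enum M c" "h = tp2 arF arR M b c" using cmp_right M by blast
    then have "mul h (iv h) = tp2 arF arR M b b" using t_eq M by simp
    then show "mul (iv g) g = mul h (iv h)" using sg by simp
  next
    assume "mul (iv g) g = mul h (iv h)"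
    then have "tp2 arF arR M' b' b' = tp2 arF arR M b b" using sg th by simp
    then obtain k where k: "iso arF arR M' M k" "\<forall>i. k (b' i) = b i"
      using tp2_iso[OF M'(1,2,2) M(1,3,3)] by blast
    have kb: "k \<circ> b' = b" using k by (auto simp: fun_eq_iff)
    have "h = tp2 arF arR M (k \<circ> b') (k \<circ> c')" using iso_tp2[OF model_struc[OF M'(1)] k(1) M'(2,3)] M'(4) by simp
    then have "h = tp2 arF arR M b (k \<circ> c')" using kb by simp
    then show "cmp g h" using cmp_intro[OF M(1-3) iso_enum[OF k(1) M'(3)]] M(4) by simp
  qed
qed

lemma alg5:
  assumes "g \<in> GG" "h \<in> GG" "k \<in> GG" "cmp g h" "cmp h k"
  shows "cmp (mul g h) k \<and> cmp g (mul h k) \<and> mul (mul g h) k = mul g (mul h k)"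
proof -
  obtain M :: "(nat,'f,'r) struc" and a b where M: "is_model arF M T" "enum M a" "enum M b" "g = tp2 arF arR M a b"
    using assms(1) by (rule G0E)
  obtain c where c: "enum M c" "h = tp2 arF arR M b c" using cmp_right M assms(4) by blast
  obtain d where d: "enum M d" "k = tp2 arF arR M c d" using cmp_right[OF M(1,3) c(1)] assms(5) c(2) by blast
  have gh: "mul g h = tp2 arF arR M a c" using G0_mul_eq[OF M(1-3) c(1)] M c by simp
  have hk: "mul h k = tp2 arF arR M b d" using G0_mul_eq[OF M(1,3) c(1) d(1)] c d by simp
  show ?thesis using gh hk M c d cmp_intro[OF M(1,2) c(1) d(1)] cmp_intro[OF M(1,2,3) d(1)]
      G0_mul_eq[OF M(1,2) c(1) d(1)] G0_mul_eq[OF M(1,2,3) d(1)] by simp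
qed

lemma alg6:
  assumes "g \<in> GG" "h \<in> GG" "cmp g h"
  shows "mul (iv g) (mul g h) = h \<and> mul (mul g h) (iv h) = g"
proof -
  obtain M :: "(nat,'f,'r) struc" and a b where M: "is_model arF M T" "enum M a" "enum M b" "g = tp2 arF arR M a b"
    using assms(1) by (rule G0E)
  obtain c where c: "enum M c" "h = tp2 arF arR M b c" using cmp_right M assms(3) by blast
  have gh: "mul g h = tp2 arF arR M a c" using G0_mul_eq[OF M(1-3) c(1)] M c by simp
  have "iv g = tp2 arF arR M b a" using G0_inv_eq[OF M(1-3)] M by simp
  moreover have "iv h = tp2 arF arR M c b" using G0_inv_eq[OF M(1,3) c(1)] c by simp
  ultimately show ?thesis using gh G0_mul_eq[OF M(1,3,2) c(1)] G0_mul_eq[OF M(1,2) c(1) M(3)] M c by simp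
qed

lemma alg7: "B0 arF arR T = (\<lambda>g. mul (iv g) g) ` GG"
proof
  show "B0 arF arR T \<subseteq> (\<lambda>g. mul (iv g) g) ` GG"
  proof
    fix p assume p: "p \<in> B0 arF arR T"
    then have pG: "p \<in> GG" and eq: "\<forall>i. FEq (Var (False, i)) (Var (True, i)) \<in> p" unfolding B0_def by auto
    obtain M :: "(nat,'f,'r) struc" and a b where M: "is_model arF M T" "enum M a" "enum M b" "p = tp2 arF arR M a b"
      using pG by (rule G0E)
    have "a i = b i" for i using eq[rule_format, of i] M(4) unfolding tp2_def tp_def by (simp add: pr_def)
    then have ab: "a = b" by auto
    have "p = mul (iv (tp2 arF arR M b b)) (tp2 arF arR M b b)" using s_eq[OF M(1,3,3)] M(4) ab by simp
    moreover have "tp2 arF arR M b b \<in> GG" using G0I[OF M(1,3,3)] .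
    ultimately show "p \<in> (\<lambda>g. mul (iv g) g) ` GG" by blast
  qed
next
  show "(\<lambda>g. mul (iv g) g) ` GG \<subseteq> B0 arF arR T"
  proof
    fix q assume "q \<in> (\<lambda>g. mul (iv g) g) ` GG"
    then obtain g where g: "g \<in> GG" "q = mul (iv g) g" by blast
    obtain M :: "(nat,'f,'r) struc" and a b where M: "is_model arF M T" "enum M a" "enum M b" "g = tp2 arF arR M a b"
      using g(1) by (rule G0E)
    have q: "q = tp2 arF arR M b b" using s_eq[OF M(1-3)] M(4) g(2) by simp
    have "FEq (Var (False, i)) (Var (True, i)) \<in> q" for i unfolding q tp2_def tp_def by (simp add: pr_def)
    then show "q \<in> B0 arF arR T" unfolding B0_def using q G0I[OF M(1,3,3)] by blast
  qed
qed

end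

context
  fixes arF :: "'f \<Rightarrow> nat" and arR :: "'r \<Rightarrow> nat" and T :: "('f,'r,nat) fm set"
begin

lemma topspace_L: "topspace (logic_topology arF arR T) = complete_types arF arR T"
proof -
  have "topspace (logic_topology arF arR T) = \<Union>{{p \<in> complete_types arF arR T. \<phi> \<in> p} | \<phi>. wf_fm arF arR \<phi>}"
    unfolding logic_topology_def by (rule topology_generated_by_topspace)
  also have "\<dots> = complete_types arF arR T"
  proof
    show "complete_types arF arR T \<subseteq> \<Union>{{p \<in> complete_types arF arR T. \<phi> \<in> p} | \<phi>. wf_fm arF arR \<phi>}"
    proof
      fix p assume p: "p \<in> complete_types arF arR T"
      then have "p \<in> {p \<in> complete_types arF arR T. FNeg FBot \<in> p}" using ct_top[OF p] by simp
      moreover have "wf_fm arF arR (FNeg FBot)" by simp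
      ultimately show "p \<in> \<Union>{{p \<in> complete_types arF arR T. \<phi> \<in> p} | \<phi>. wf_fm arF arR \<phi>}" by blast
    qed
  qed auto
  finally show ?thesis .
qed

lemma G0_sub_ct: "G0 arF arR T \<subseteq> complete_types arF arR T"
proof
  fix g assume "g \<in> G0 arF arR T"
  then obtain M :: "(nat,'f,'r) struc" and a b where M: "is_model arF M T" "enum M a" "enum M b" "g = tp2 arF arR M a b"
    by (rule G0E)
  show "g \<in> complete_types arF arR T" unfolding M(4) tp2_def
    by (rule tp_ct[OF M(1)]) (simp add: enum_pr[OF M(2,3)])
qed

lemma topspace_X: "topspace (G0_topology arF arR T) = G0 arF arR T"
  unfolding G0_topology_def topspace_subtopology topspace_L using G0_sub_ct by blast

lemma basis_L:
  assumes "openin (logic_topology arF arR T) U" "p \<in> U"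
  shows "\<exists>\<phi>. wf_fm arF arR \<phi> \<and> \<phi> \<in> p \<and> {q \<in> complete_types arF arR T. \<phi> \<in> q} \<subseteq> U"
proof -
  have "generate_topology_on {{p \<in> complete_types arF arR T. \<phi> \<in> p} | \<phi>. wf_fm arF arR \<phi>} U"
    using assms(1) unfolding logic_topology_def by (rule openin_topology_generated_by)
  moreover have pct0: "p \<in> complete_types arF arR T" using openin_subset[OF assms(1)] assms(2) topspace_L by auto
  ultimately show ?thesis using assms(2)
  proof (induction arbitrary: p)
    case Empty then show ?case by simp
  next
    case (Int a b)
    obtain \<phi> where \<phi>: "wf_fm arF arR \<phi>" "\<phi> \<in> p" "{q \<in> complete_types arF arR T. \<phi> \<in> q} \<subseteq> a"
      using Int.IH(1) Int.prems by blast
    obtain \<psi> where \<psi>: "wf_fm arF arR \<psi>" "\<psi> \<in> p" "{q \<in> complete_types arF arR T. \<psi> \<in> q} \<subseteq> b"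
      using Int.IH(2) Int.prems by blast
    have pct: "p \<in> complete_types arF arR T" using Int.prems by blast
    have "FConj \<phi> \<psi> \<in> p" using ct_conj[OF pct \<phi>(1) \<psi>(1)] \<phi> \<psi> by simp
    moreover have "{q \<in> complete_types arF arR T. FConj \<phi> \<psi> \<in> q} \<subseteq> a \<inter> b"
      using ct_conj[OF _ \<phi>(1) \<psi>(1)] \<phi>(3) \<psi>(3) by blast
    ultimately show ?case using \<phi>(1) \<psi>(1) by (intro exI[of _ "FConj \<phi> \<psi>"]) simp
  next
    case (UN K)
    then obtain k where "k \<in> K" "p \<in> k" by blast
    then obtain \<phi> where "wf_fm arF arR \<phi>" "\<phi> \<in> p" "{q \<in> complete_types arF arR T. \<phi> \<in> q} \<subseteq> k"
      using UN.IH UN.prems by blast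
    then show ?case using \<open>k \<in> K\<close> by blast
  next
    case (Basis s)
    then obtain \<phi> where "s = {p \<in> complete_types arF arR T. \<phi> \<in> p}" "wf_fm arF arR \<phi>" by blast
    then show ?case using Basis.prems by blast
  qed
qed

definition bas :: "('f,'r,bool \<times> nat) fm \<Rightarrow> ('f,'r,bool \<times> nat) fm set set" where
  "bas \<phi> = {q \<in> G0 arF arR T. \<phi> \<in> q}"

lemma openin_bas_any: "openin (G0_topology arF arR T) (bas \<phi>)"
proof (cases "wf_fm arF arR \<phi>")
  case True
  have "openin (logic_topology arF arR T) {q \<in> complete_types arF arR T. \<phi> \<in> q}"
    unfolding logic_topology_def by (rule topology_generated_by_Basis) (use True in blast)
  moreover have "bas \<phi> = {q \<in> complete_types arF arR T. \<phi> \<in> q} \<inter> G0 arF arR T"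
    unfolding bas_def using G0_sub_ct by blast
  ultimately show ?thesis unfolding G0_topology_def openin_subtopology by blast
next
  case False
  have "bas \<phi> = {}" unfolding bas_def using G0_sub_ct ct_wf False by blast
  then show ?thesis by simp
qed

lemma openin_nbas: "openin (G0_topology arF arR T) {q \<in> G0 arF arR T. \<phi> \<notin> q}"
proof (cases "wf_fm arF arR \<phi>")
  case True
  have "{q \<in> G0 arF arR T. \<phi> \<notin> q} = bas (FNeg \<phi>)"
    unfolding bas_def using G0_sub_ct ct_neg[OF _ True] by blast
  then show ?thesis using openin_bas_any by simp
next
  case False
  have "{q \<in> G0 arF arR T. \<phi> \<notin> q} = topspace (G0_topology arF arR T)"
    using topspace_X G0_sub_ct ct_wf False by blast
  then show ?thesis by simp
qed

lemma basis_X: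
  assumes "openin (G0_topology arF arR T) U" "g \<in> U"
  shows "\<exists>\<phi>. wf_fm arF arR \<phi> \<and> \<phi> \<in> g \<and> bas \<phi> \<subseteq> U"
proof -
  obtain V where V: "openin (logic_topology arF arR T) V" "U = V \<inter> G0 arF arR T"
    using assms(1) unfolding G0_topology_def openin_subtopology by blast
  then obtain \<phi> where "wf_fm arF arR \<phi>" "\<phi> \<in> g" "{q \<in> complete_types arF arR T. \<phi> \<in> q} \<subseteq> V"
    using basis_L assms(2) by blast
  then show ?thesis using V G0_sub_ct unfolding bas_def by blast
qed

definition swp :: "bool \<times> nat \<Rightarrow> bool \<times> nat" where "swp v = (\<not> fst v, snd v)"

lemma inj_swp: "inj swp" unfolding swp_def by (auto intro: injI)

lemma swap_mem:
  fixes M :: "(nat,'f,'r) struc"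
  assumes "is_model arF M T" "enum M a" "enum M b"
  shows "renf swp \<phi> \<in> tp2 arF arR M a b \<longleftrightarrow> \<phi> \<in> tp2 arF arR M b a"
proof -
  have "pr a b \<circ> swp = pr b a" by (auto simp: fun_eq_iff pr_def swp_def)
  then show ?thesis unfolding tp2_def tp_def by (simp add: sat_renf[OF inj_swp] wf_renf)
qed

lemma cont_inv: "continuous_map (G0_topology arF arR T) (G0_topology arF arR T) (G0_inv arF arR T)"
  unfolding continuous_map
proof (intro conjI allI impI)
  show "G0_inv arF arR T ` topspace (G0_topology arF arR T) \<subseteq> topspace (G0_topology arF arR T)"
    using alg1 topspace_X by auto
next
  fix U assume U: "openin (G0_topology arF arR T) U"
  show "openin (G0_topology arF arR T) {x \<in> topspace (G0_topology arF arR T). G0_inv arF arR T x \<in> U}"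
  proof (subst openin_subopen, intro ballI)
    fix g assume g: "g \<in> {x \<in> topspace (G0_topology arF arR T). G0_inv arF arR T x \<in> U}"
    then have gG: "g \<in> G0 arF arR T" and gU: "G0_inv arF arR T g \<in> U" using topspace_X by auto
    obtain \<phi> where \<phi>: "wf_fm arF arR \<phi>" "\<phi> \<in> G0_inv arF arR T g" "bas \<phi> \<subseteq> U"
      using basis_X[OF U gU] by blast
    have "g \<in> bas (renf swp \<phi>)"
    proof -
      obtain M :: "(nat,'f,'r) struc" and a b where M: "is_model arF M T" "enum M a" "enum M b" "g = tp2 arF arR M a b"
        using gG by (rule G0E)
      show ?thesis using \<phi>(2) G0_inv_eq[OF M(1-3)] swap_mem[OF M(1-3)] M(4) gG unfolding bas_def by simp
    qed
    moreover have "bas (renf swp \<phi>) \<subseteq> {x \<in> topspace (G0_topology arF arR T). G0_inv arF arR T x \<in> U}"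
    proof
      fix g' assume g': "g' \<in> bas (renf swp \<phi>)"
      then have g'G: "g' \<in> G0 arF arR T" unfolding bas_def by simp
      obtain M :: "(nat,'f,'r) struc" and a b where M: "is_model arF M T" "enum M a" "enum M b" "g' = tp2 arF arR M a b"
        using g'G by (rule G0E)
      have "G0_inv arF arR T g' \<in> bas \<phi>"
        using g' G0_inv_eq[OF M(1-3)] swap_mem[OF M(1-3)] M(4) G0I[OF M(1,3,2)] unfolding bas_def by simp
      then show "g' \<in> {x \<in> topspace (G0_topology arF arR T). G0_inv arF arR T x \<in> U}"
        using \<phi>(3) g'G topspace_X by auto
    qed
    ultimately show "\<exists>T'. openin (G0_topology arF arR T) T' \<and> g \<in> T' \<and>
        T' \<subseteq> {x \<in> topspace (G0_topology arF arR T). G0_inv arF arR T x \<in> U}"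
      using openin_bas_any by blast
  qed
qed

end

lemma fv_bound:
  fixes \<phi> :: "('f,'r,bool \<times> nat) fm"
  shows "\<exists>m. \<forall>c i. (c,i) \<in> fv_fm \<phi> \<longrightarrow> i < m"
proof -
  have "finite (snd ` fv_fm \<phi>)" using finite_fv_fm by blast
  then obtain m where "snd ` fv_fm \<phi> \<subseteq> {..<m}" using finite_nat_bounded by blast
  have "i < m" if "(c,i) \<in> fv_fm \<phi>" for c i
  proof -
    have "i \<in> snd ` fv_fm \<phi>" using that by (metis image_eqI snd_conv)
    then show ?thesis using \<open>snd ` fv_fm \<phi> \<subseteq> {..<m}\<close> by auto
  qed
  then show ?thesis by blast
qed

context
  fixes arF :: "'f \<Rightarrow> nat" and arR :: "'r \<Rightarrow> nat" and T :: "('f,'r,nat) fm set"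
begin

lemma cont_mul:
  "continuous_map (subtopology (prod_topology (G0_topology arF arR T) (G0_topology arF arR T))
      {(g, h). g \<in> G0 arF arR T \<and> h \<in> G0 arF arR T \<and> G0_composable arF arR T g h})
    (G0_topology arF arR T) (\<lambda>(g, h). G0_mul arF arR T g h)"
  (is "continuous_map ?Z ?X ?f")
proof -
  let ?C = "{(g, h). g \<in> G0 arF arR T \<and> h \<in> G0 arF arR T \<and> G0_composable arF arR T g h}"
  have tZ: "topspace ?Z = ?C" using topspace_X by auto
  show ?thesis unfolding continuous_map
  proof (intro conjI allI impI)
    show "?f ` topspace ?Z \<subseteq> topspace ?X" unfolding tZ topspace_X using alg2 by auto
  next
    fix U assume U: "openin ?X U"
    show "openin ?Z {x \<in> topspace ?Z. ?f x \<in> U}"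
    proof (subst openin_subopen, intro ballI)
      fix z assume z: "z \<in> {x \<in> topspace ?Z. ?f x \<in> U}"
      obtain g h where zgh: "z = (g,h)" by (cases z)
      have gG: "g \<in> G0 arF arR T" and hG: "h \<in> G0 arF arR T" and gh: "G0_composable arF arR T g h"
        and ghU: "G0_mul arF arR T g h \<in> U" using z zgh tZ by auto
      obtain M :: "(nat,'f,'r) struc" and a b where M: "is_model arF M T" "enum M a" "enum M b" "g = tp2 arF arR M a b"
        using gG by (rule G0E)
      obtain c where c: "enum M c" "h = tp2 arF arR M b c" using cmp_right[OF M(1-3)] gh M(4) by blast
      have mgh: "G0_mul arF arR T g h = tp2 arF arR M a c" using G0_mul_eq[OF M(1-3) c(1)] M(4) c(2) by simp
      obtain \<phi> where \<phi>: "wf_fm arF arR \<phi>" "\<phi> \<in> tp2 arF arR M a c" "bas arF arR T \<phi> \<subseteq> U"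
        using basis_X[OF U ghU] mgh by auto
      obtain m where m: "\<forall>c i. (c,i) \<in> fv_fm \<phi> \<longrightarrow> i < m" using fv_bound by blast
      have ex1: "\<exists>k. a i = b k" for i using M(2,3) unfolding enum_def by (metis rangeE rangeI)
      have ex2: "\<exists>k. c i = b k" for i using c(1) M(3) unfolding enum_def by (metis rangeE rangeI)
      define \<tau> where "\<tau> i = (SOME k. a i = b k)" for i
      define \<sigma> where "\<sigma> i = (SOME k. c i = b k)" for i
      have \<tau>: "a i = b (\<tau> i)" for i unfolding \<tau>_def by (rule someI_ex[OF ex1])
      have \<sigma>: "c i = b (\<sigma> i)" for i unfolding \<sigma>_def by (rule someI_ex[OF ex2])
      define \<alpha> :: "('f,'r,bool \<times> nat) fm" where
        "\<alpha> = conjs (map (\<lambda>i. FEq (Var (False,i)) (Var (True, \<tau> i))) [0..<m])"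
      define \<beta> :: "('f,'r,bool \<times> nat) fm" where
        "\<beta> = conjs (map (\<lambda>j. FEq (Var (False, \<sigma> j)) (Var (True, j))) [0..<m])"
      define \<rho> where "\<rho> v = (if fst v then (False, \<sigma> (snd v)) else (False, \<tau> (snd v)))" for v :: "bool \<times> nat"
      define \<gamma> where "\<gamma> = FConj \<beta> (subst \<rho> \<phi>)"
      have wf\<alpha>: "wf_fm arF arR \<alpha>" unfolding \<alpha>_def by (simp add: wf_conjs)
      have wf\<gamma>: "wf_fm arF arR \<gamma>" unfolding \<gamma>_def \<beta>_def using \<phi>(1) by (simp add: wf_conjs wf_fm_subst)
      let ?W = "(bas arF arR T \<alpha> \<times> bas arF arR T \<gamma>) \<inter> ?C"
      have "openin (prod_topology ?X ?X) (bas arF arR T \<alpha> \<times> bas arF arR T \<gamma>)"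
        by (simp add: openin_prod_Times_iff openin_bas_any)
      then have oW: "openin ?Z ?W" unfolding openin_subtopology by blast
      have "sat M (pr a b) \<alpha>" unfolding \<alpha>_def using \<tau> by (simp add: sat_conjs pr_def)
      then have "\<alpha> \<in> g" unfolding M(4) tp2_def tp_def using wf\<alpha> by simp
      moreover have "\<gamma> \<in> h"
      proof -
        have "pr b c \<circ> \<rho> = pr a c" using \<tau> \<sigma> by (auto simp: fun_eq_iff pr_def \<rho>_def)
        then have "sat M (pr b c) (subst \<rho> \<phi>)" using \<phi>(2) unfolding tp2_def tp_def by (simp add: sat_subst[OF inf_V])
        moreover have "sat M (pr b c) \<beta>" unfolding \<beta>_def using \<sigma> by (simp add: sat_conjs pr_def)
        ultimately show ?thesis unfolding c(2) tp2_def tp_def \<gamma>_def using wf\<gamma> \<gamma>_def by simp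
      qed
      ultimately have zW: "z \<in> ?W" using zgh gG hG gh unfolding bas_def by auto
      have "?W \<subseteq> {x \<in> topspace ?Z. ?f x \<in> U}"
      proof
        fix z' assume z': "z' \<in> ?W"
        obtain g' h' where z'gh: "z' = (g',h')" by (cases z')
        have g'G: "g' \<in> G0 arF arR T" and h'G: "h' \<in> G0 arF arR T" and gh': "G0_composable arF arR T g' h'"
          and \<alpha>': "\<alpha> \<in> g'" and \<gamma>': "\<gamma> \<in> h'" using z' z'gh unfolding bas_def by auto
        obtain N :: "(nat,'f,'r) struc" and a' b' where N: "is_model arF N T" "enum N a'" "enum N b'" "g' = tp2 arF arR N a' b'"
          using g'G by (rule G0E)
        obtain c' where c': "enum N c'" "h' = tp2 arF arR N b' c'" using cmp_right[OF N(1-3)] gh' N(4) by blast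
        have a'b': "\<forall>i<m. a' i = b' (\<tau> i)" using \<alpha>' N(4) unfolding tp2_def tp_def \<alpha>_def by (simp add: sat_conjs pr_def)
        have b'c': "\<forall>j<m. b' (\<sigma> j) = c' j" and sub': "sat N (pr b' c') (subst \<rho> \<phi>)"
          using \<gamma>' c'(2) unfolding tp2_def tp_def \<gamma>_def \<beta>_def by (simp_all add: sat_conjs pr_def)
        have "sat N (pr b' c' \<circ> \<rho>) \<phi>" using sub' by (simp add: sat_subst[OF inf_V])
        moreover have "sat N (pr b' c' \<circ> \<rho>) \<phi> = sat N (pr a' c') \<phi>"
        proof (rule sat_agree)
          fix v assume v: "v \<in> fv_fm \<phi>"
          obtain cc i where vv: "v = (cc, i)" by (cases v)
          have "i < m" using m v vv by blast
          then show "(pr b' c' \<circ> \<rho>) v = pr a' c' v" using a'b' b'c' vv by (cases cc) (auto simp: pr_def \<rho>_def)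
        qed
        ultimately have "\<phi> \<in> tp2 arF arR N a' c'" unfolding tp2_def tp_def using \<phi>(1) by simp
        moreover have "G0_mul arF arR T g' h' = tp2 arF arR N a' c'"
          using G0_mul_eq[OF N(1-3) c'(1)] N(4) c'(2) by simp
        moreover have "tp2 arF arR N a' c' \<in> G0 arF arR T" using G0I[OF N(1,2) c'(1)] .
        ultimately have "G0_mul arF arR T g' h' \<in> U" using \<phi>(3) unfolding bas_def by auto
        then show "z' \<in> {x \<in> topspace ?Z. ?f x \<in> U}" using z' z'gh tZ by auto
      qed
      then show "\<exists>T'. openin ?Z T' \<and> z \<in> T' \<and> T' \<subseteq> {x \<in> topspace ?Z. ?f x \<in> U}"
        using oW zW by blast
    qed
  qed
qed

end

context
  fixes arF :: "'f \<Rightarrow> nat" and arR :: "'r \<Rightarrow> nat" and T :: "('f,'r,nat) fm set"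
begin

lemma B0_tp:
  assumes "q \<in> B0 arF arR T"
  obtains N :: "(nat,'f,'r) struc" and b where "is_model arF N T" "enum N b" "q = tp2 arF arR N b b"
proof -
  have qG: "q \<in> G0 arF arR T" and eq: "\<forall>i. FEq (Var (False, i)) (Var (True, i)) \<in> q"
    using assms unfolding B0_def by auto
  obtain M :: "(nat,'f,'r) struc" and a b where M: "is_model arF M T" "enum M a" "enum M b" "q = tp2 arF arR M a b"
    using qG by (rule G0E)
  have "a i = b i" for i using eq[rule_format, of i] M(4) unfolding tp2_def tp_def by (simp add: pr_def)
  then have "a = b" by auto
  then show ?thesis using that M by blast
qed

lemma open_s:
  "open_map (G0_topology arF arR T) (subtopology (G0_topology arF arR T) (B0 arF arR T))
     (\<lambda>g. G0_mul arF arR T (G0_inv arF arR T g) g)"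
  (is "open_map ?X ?Y ?s")
  unfolding open_map_def
proof (intro allI impI)
  fix U assume U: "openin ?X U"
  show "openin ?Y (?s ` U)"
  proof (subst openin_subopen, intro ballI)
    fix y assume "y \<in> ?s ` U"
    then obtain g where gU: "g \<in> U" and y: "y = ?s g" by blast
    have gG: "g \<in> G0 arF arR T" using openin_subset[OF U] gU topspace_X[of arF arR T] by blast
    obtain M :: "(nat,'f,'r) struc" and a b where M: "is_model arF M T" "enum M a" "enum M b" "g = tp2 arF arR M a b"
      using gG by (rule G0E)
    have sg: "?s g = tp2 arF arR M b b" using s_eq[OF M(1-3)] M(4) by simp
    obtain \<phi> where \<phi>: "wf_fm arF arR \<phi>" "\<phi> \<in> g" "bas arF arR T \<phi> \<subseteq> U" using basis_X[OF U gU] by blast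
    obtain m where m: "\<forall>c i. (c,i) \<in> fv_fm \<phi> \<longrightarrow> i < m" using fv_bound by blast
    define vs where "vs = map (\<lambda>i. (False, i)) [0..<m]"
    define \<psi> where "\<psi> = exs vs \<phi>"
    have wf\<psi>: "wf_fm arF arR \<psi>" unfolding \<psi>_def using \<phi>(1) by (simp add: wf_exs)
    have mem_vs: "v \<in> set vs \<longleftrightarrow> (\<not> fst v \<and> snd v < m)" for v unfolding vs_def by (cases v) auto
    let ?O = "bas arF arR T \<psi> \<inter> B0 arF arR T"
    have oO: "openin ?Y ?O" unfolding openin_subtopology using openin_bas_any by blast
    have "?s g \<in> B0 arF arR T" using alg7 gG by blast
    moreover have "\<psi> \<in> ?s g"
    proof -
      define e' where "e' v = (if v \<in> set vs then pr a b v else pr b b v)" for v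
      have ran: "\<forall>v\<in>set vs. e' v \<in> carr M" unfolding e'_def using enum_pr[OF M(2,3)] by auto
      have out: "\<forall>v. v \<notin> set vs \<longrightarrow> e' v = pr b b v" unfolding e'_def by simp
      have "sat M (pr a b) \<phi>" using \<phi>(2) M(4) unfolding tp2_def tp_def by simp
      moreover have "sat M (pr a b) \<phi> = sat M e' \<phi>"
      proof (rule sat_agree)
        fix v assume v: "v \<in> fv_fm \<phi>"
        obtain cc i where vv: "v = (cc, i)" by (cases v)
        have "i < m" using m v vv by blast
        then show "pr a b v = e' v" using vv mem_vs by (cases cc) (auto simp: e'_def pr_def)
      qed
      ultimately have "sat M (pr b b) \<psi>" unfolding \<psi>_def sat_exs using ran out by blast
      then show ?thesis unfolding sg tp2_def tp_def using wf\<psi> by simp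
    qed
    ultimately have yO: "y \<in> ?O" unfolding bas_def using y G0I[OF M(1,3,3)] sg by simp
    have "?O \<subseteq> ?s ` U"
    proof
      fix q assume q: "q \<in> ?O"
      obtain N :: "(nat,'f,'r) struc" and b' where N: "is_model arF N T" "enum N b'" "q = tp2 arF arR N b' b'"
        using q by (auto elim: B0_tp)
      have "sat N (pr b' b') \<psi>" using q N(3) unfolding bas_def tp2_def tp_def by simp
      then obtain e' where e': "\<forall>v\<in>set vs. e' v \<in> carr N" "\<forall>v. v \<notin> set vs \<longrightarrow> e' v = pr b' b' v" "sat N e' \<phi>"
        unfolding \<psi>_def sat_exs by blast
      define a' where "a' i = (if i < m then e' (False, i) else b' (i - m))" for i
      have "enum N a'"
        unfolding enum_def
      proof
        show "range a' \<subseteq> carr N"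
        proof
          fix x assume "x \<in> range a'"
          then obtain i where x: "x = a' i" by blast
          show "x \<in> carr N"
          proof (cases "i < m")
            case True
            then have "(False, i) \<in> set vs" using mem_vs by simp
            then show ?thesis using e'(1) x True unfolding a'_def by auto
          next
            case False
            then show ?thesis using x N(2) unfolding a'_def enum_def by auto
          qed
        qed
      next
        show "carr N \<subseteq> range a'"
        proof
          fix x assume "x \<in> carr N"
          then obtain k where "x = b' k" using N(2) unfolding enum_def by blast
          then have "x = a' (k + m)" unfolding a'_def by simp
          then show "x \<in> range a'" by blast
        qed
      qed
      have "sat N e' \<phi> = sat N (pr a' b') \<phi>"
      proof (rule sat_agree)
        fix v assume v: "v \<in> fv_fm \<phi>"
        obtain cc i where vv: "v = (cc, i)" by (cases v)
        have "i < m" using m v vv by blast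
        then show "e' v = pr a' b' v" using vv mem_vs e'(2) by (cases cc) (auto simp: a'_def pr_def)
      qed
      then have "\<phi> \<in> tp2 arF arR N a' b'" using e'(3) \<phi>(1) unfolding tp2_def tp_def by simp
      moreover have gG': "tp2 arF arR N a' b' \<in> G0 arF arR T" using G0I[OF N(1) \<open>enum N a'\<close> N(2)] .
      ultimately have h1: "tp2 arF arR N a' b' \<in> U" using \<phi>(3) unfolding bas_def by auto
      have h2: "?s (tp2 arF arR N a' b') = q" using s_eq[OF N(1) \<open>enum N a'\<close> N(2)] N(3) by simp
      show "q \<in> ?s ` U" using image_eqI[where f="?s", OF h2[symmetric] h1] .
    qed
    then show "\<exists>T'. openin ?Y T' \<and> y \<in> T' \<and> T' \<subseteq> ?s ` U" using oO yO by blast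
  qed
qed

end

instance trm :: (countable, countable) countable
  by countable_datatype

instance fm :: (countable, countable, countable) countable
  by countable_datatype

lemma countable_fm:
  assumes "countable (UNIV :: 'f set)" "countable (UNIV :: 'r set)"
  shows "countable (UNIV :: ('f,'r,bool \<times> nat) fm set)"
proof -
  obtain gf :: "'f \<Rightarrow> nat" where gf: "inj gf" using assms(1) unfolding countable_def by blast
  obtain gr :: "'r \<Rightarrow> nat" where gr: "inj gr" using assms(2) unfolding countable_def by blast
  have "inj (map_fm gf gr (id :: bool \<times> nat \<Rightarrow> bool \<times> nat))"
    using gf gr by (intro fm.inj_map) auto
  moreover have "countable (range (map_fm gf gr (id :: bool \<times> nat \<Rightarrow> bool \<times> nat)))" by simp
  ultimately show ?thesis using countable_image_inj_on by blast
qed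

lemma G0_eq_Good:
  fixes arF :: "'f \<Rightarrow> nat" and arR :: "'r \<Rightarrow> nat"
  assumes "\<forall>\<sigma>\<in>T. wf_fm arF arR \<sigma>"
  shows "G0 arF arR T = Good arF arR T"
proof
  show "G0 arF arR T \<subseteq> Good arF arR T" by (rule G0_sub_Good)
  show "Good arF arR T \<subseteq> G0 arF arR T"
  proof
    fix p assume "p \<in> Good arF arR T"
    then have "tmodel arF arR T p" using assms by (simp add: tmodel_def)
    then show "p \<in> G0 arF arR T" by (rule tmodel.p_G0)
  qed
qed

definition chi :: "('f,'r,bool \<times> nat) fm set \<Rightarrow> ('f,'r,bool \<times> nat) fm \<Rightarrow> real" where
  "chi p = (\<lambda>\<phi>. if \<phi> \<in> p then 1 else 0)"

context
  fixes arF :: "'f \<Rightarrow> nat" and arR :: "'r \<Rightarrow> nat" and T :: "('f,'r,nat) fm set"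
  assumes cf: "countable (UNIV :: 'f set)" and cr: "countable (UNIV :: 'r set)"
    and wfT: "\<forall>\<sigma>\<in>T. wf_fm arF arR \<sigma>"
begin

lemma second_countable_X: "second_countable (G0_topology arF arR T)"
  unfolding second_countable_def
proof (intro exI[of _ "range (bas arF arR T)"] conjI)
  show "countable (range (bas arF arR T))" using countable_fm[OF cf cr] by simp
  show "\<forall>V\<in>range (bas arF arR T). openin (G0_topology arF arR T) V" using openin_bas_any by blast
  show "\<forall>U x. openin (G0_topology arF arR T) U \<and> x \<in> U \<longrightarrow> (\<exists>V\<in>range (bas arF arR T). x \<in> V \<and> V \<subseteq> U)"
  proof (intro allI impI)
    fix U x assume Ux: "openin (G0_topology arF arR T) U \<and> x \<in> U"
    then obtain \<phi> where \<phi>: "\<phi> \<in> x" "bas arF arR T \<phi> \<subseteq> U" using basis_X by blast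
    have "x \<in> G0 arF arR T"
      using openin_subset[of "G0_topology arF arR T" U] Ux topspace_X[of arF arR T] by blast
    then have "x \<in> bas arF arR T \<phi>" using \<phi>(1) unfolding bas_def by blast
    then show "\<exists>V\<in>range (bas arF arR T). x \<in> V \<and> V \<subseteq> U" using \<phi>(2) by blast
  qed
qed

abbreviation "PP \<equiv> powertop_real (UNIV :: ('f,'r,bool \<times> nat) fm set)"

lemma topspace_PP: "topspace PP = UNIV" by simp

lemma cont_coord: "continuous_map (G0_topology arF arR T) euclideanreal (\<lambda>p. chi p \<phi>)"
  unfolding continuous_map
proof (intro conjI allI impI)
  show "(\<lambda>p. chi p \<phi>) ` topspace (G0_topology arF arR T) \<subseteq> topspace euclideanreal" by simp
next
  fix V :: "real set" assume "openin euclideanreal V"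
  have eq: "{x \<in> topspace (G0_topology arF arR T). chi x \<phi> \<in> V} =
     (if (1::real) \<in> V then bas arF arR T \<phi> else {}) \<union> (if (0::real) \<in> V then {q \<in> G0 arF arR T. \<phi> \<notin> q} else {})"
    unfolding topspace_X bas_def chi_def by auto
  show "openin (G0_topology arF arR T) {x \<in> topspace (G0_topology arF arR T). chi x \<phi> \<in> V}"
    unfolding eq by (auto intro!: openin_Un openin_bas_any openin_nbas)
qed

lemma homeo: "homeomorphic_map (G0_topology arF arR T) (subtopology PP (chi ` G0 arF arR T)) chi"
proof (rule bijective_open_imp_homeomorphic_map)
  show "continuous_map (G0_topology arF arR T) (subtopology PP (chi ` G0 arF arR T)) chi"
    unfolding continuous_map_in_subtopology continuous_map_componentwise_UNIV
    using cont_coord by (auto simp: topspace_X)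
next
  show "chi ` topspace (G0_topology arF arR T) = topspace (subtopology PP (chi ` G0 arF arR T))"
    by (simp add: topspace_X)
next
  show "inj_on chi (topspace (G0_topology arF arR T))"
  proof (rule inj_onI)
    fix p q assume "chi p = chi q"
    then have "\<forall>\<phi>. (\<phi> \<in> p) = (\<phi> \<in> q)" unfolding chi_def by (metis zero_neq_one)
    then show "p = q" by blast
  qed
next
  show "open_map (G0_topology arF arR T) (subtopology PP (chi ` G0 arF arR T)) chi"
    unfolding open_map_def
  proof (intro allI impI)
    fix U assume U: "openin (G0_topology arF arR T) U"
    show "openin (subtopology PP (chi ` G0 arF arR T)) (chi ` U)"
    proof (subst openin_subopen, intro ballI)
      fix y assume "y \<in> chi ` U"
      then obtain g where g: "g \<in> U" "y = chi g" by blast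
      obtain \<phi> where \<phi>: "\<phi> \<in> g" "bas arF arR T \<phi> \<subseteq> U" using basis_X[OF U g(1)] by blast
      have gG: "g \<in> G0 arF arR T" using openin_subset[OF U] g(1) topspace_X[of arF arR T] by blast
      let ?O = "{f \<in> topspace PP. f \<phi> \<in> {1/2<..}}"
      have "openin PP ?O"
        by (rule openin_continuous_map_preimage[OF continuous_map_product_projection]) auto
      then have oO: "openin (subtopology PP (chi ` G0 arF arR T)) (?O \<inter> chi ` G0 arF arR T)"
        unfolding openin_subtopology by blast
      have "y \<in> ?O \<inter> chi ` G0 arF arR T" using g \<phi> gG unfolding chi_def by auto
      moreover have "?O \<inter> chi ` G0 arF arR T \<subseteq> chi ` U"
      proof
        fix f assume "f \<in> ?O \<inter> chi ` G0 arF arR T"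
        then obtain q where q: "q \<in> G0 arF arR T" "f = chi q" "chi q \<phi> > 1/2" by auto
        then have "\<phi> \<in> q" unfolding chi_def by (auto split: if_splits)
        then have "q \<in> U" using \<phi>(2) q(1) unfolding bas_def by blast
        then show "f \<in> chi ` U" using q(2) by blast
      qed
      ultimately show "\<exists>T'. openin (subtopology PP (chi ` G0 arF arR T)) T' \<and> y \<in> T' \<and> T' \<subseteq> chi ` U"
        using oO by blast
    qed
  qed
qed

end

context
  fixes arF :: "'f \<Rightarrow> nat" and arR :: "'r \<Rightarrow> nat" and T :: "('f,'r,nat) fm set"
  assumes cf: "countable (UNIV :: 'f set)" and cr: "countable (UNIV :: 'r set)"
    and wfT: "\<forall>\<sigma>\<in>T. wf_fm arF arR \<sigma>"
begin


lemma tPP: "topspace (PP :: (('f,'r,bool \<times> nat) fm \<Rightarrow> real) topology) = UNIV" by simp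

lemma coord_closed: assumes "closed S" shows "closedin (PP :: (('f,'r,bool \<times> nat) fm \<Rightarrow> real) topology) {f. f \<phi> \<in> S}"
proof -
  have "closedin (PP :: (('f,'r,bool \<times> nat) fm \<Rightarrow> real) topology) {x \<in> topspace PP. x \<phi> \<in> S}"
    by (rule closedin_continuous_map_preimage[OF continuous_map_product_projection])
      (simp_all only: UNIV_I closed_closedin[symmetric] assms)
  then show ?thesis by (simp only: tPP UNIV_I simp_thms)
qed

lemma coord_open: assumes "open S" shows "openin (PP :: (('f,'r,bool \<times> nat) fm \<Rightarrow> real) topology) {f. f \<phi> \<in> S}"
proof -
  have "openin PP {x \<in> topspace PP. x \<phi> \<in> S}"
    by (rule openin_continuous_map_preimage[OF continuous_map_product_projection])
      (simp_all only: UNIV_I open_openin[symmetric] assms)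
  then show ?thesis by (simp only: tPP UNIV_I simp_thms)
qed

lemma PP_cm: "completely_metrizable_space (PP :: (('f,'r,bool \<times> nat) fm \<Rightarrow> real) topology)"
proof -
  have c: "countable {i \<in> (UNIV :: ('f,'r,bool \<times> nat) fm set). \<not> (\<exists>a. topspace euclideanreal \<subseteq> {a})}"
    by (rule countable_subset[OF _ countable_fm[OF cf cr]]) simp
  have e: "completely_metrizable_space euclideanreal" by (rule completely_metrizable_space_euclidean)
  show ?thesis unfolding completely_metrizable_space_product_topology
    by (intro disjI2 conjI c ballI e)
qed

definition Bad :: "('f,'r,bool \<times> nat) fm set set" where
  "Bad = {F. finite F \<and> \<not> (\<exists>(M :: (nat,'f,'r) struc) e. is_model arF M T \<and> range e \<subseteq> carr M \<and> (\<forall>\<phi>\<in>F. sat M e \<phi>))}"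

definition A1 :: "('f,'r,bool \<times> nat) fm \<Rightarrow> (('f,'r,bool \<times> nat) fm \<Rightarrow> real) set" where
  "A1 \<phi> = {f. f \<phi> \<in> {0,1}}"
definition A2 :: "('f,'r,bool \<times> nat) fm \<Rightarrow> (('f,'r,bool \<times> nat) fm \<Rightarrow> real) set" where
  "A2 \<phi> = {f. f \<phi> \<in> {0}}"
definition A3 :: "('f,'r,bool \<times> nat) fm \<Rightarrow> (('f,'r,bool \<times> nat) fm \<Rightarrow> real) set" where
  "A3 \<phi> = {f. f \<phi> \<in> {1}} \<union> {f. f (FNeg \<phi>) \<in> {1}}"
definition A4 :: "('f,'r,bool \<times> nat) fm set \<Rightarrow> (('f,'r,bool \<times> nat) fm \<Rightarrow> real) set" where
  "A4 F = (\<Union>\<phi>\<in>F. {f. f \<phi> \<in> {..<1/2}})"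
definition A5 :: "nat \<Rightarrow> (('f,'r,bool \<times> nat) fm \<Rightarrow> real) set" where
  "A5 i = (\<Union>j. {f. f (FEq (Var (False,i)) (Var (True,j))) \<in> {1/2<..}})"
definition A6 :: "nat \<Rightarrow> (('f,'r,bool \<times> nat) fm \<Rightarrow> real) set" where
  "A6 j = (\<Union>i. {f. f (FEq (Var (False,i)) (Var (True,j))) \<in> {1/2<..}})"
definition A7 :: "(bool \<times> nat) \<times> ('f,'r,bool \<times> nat) fm \<Rightarrow> (('f,'r,bool \<times> nat) fm \<Rightarrow> real) set" where
  "A7 z = {f. f (FEx (fst z) (snd z)) \<in> {..<1/2}} \<union>
     (\<Union>w\<in>{w. w \<noteq> fst z}. {f. f (FEx (fst z) (FConj (FEq (Var (fst z)) (Var w)) (snd z))) \<in> {1/2<..}})"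

definition AA where
  "AA = range A1 \<union> A2 ` {\<phi>. \<not> wf_fm arF arR \<phi>} \<union> A3 ` {\<phi>. wf_fm arF arR \<phi>} \<union> A4 ` Bad
      \<union> range A5 \<union> range A6 \<union> A7 ` {z. wf_fm arF arR (snd z)}"

lemma AA_gdelta: "gdelta_in PP (\<Inter>AA)"
proof (rule gdelta_in_Inter)
  have cfm: "countable (UNIV :: ('f,'r,bool \<times> nat) fm set)" by (rule countable_fm[OF cf cr])
  have "countable Bad"
  proof (rule countable_subset)
    show "Bad \<subseteq> {A. finite A \<and> A \<subseteq> UNIV}" unfolding Bad_def by auto
    show "countable {A :: ('f,'r,bool \<times> nat) fm set. finite A \<and> A \<subseteq> UNIV}"
      by (rule countable_Collect_finite_subset[OF cfm])
  qed
  moreover have "countable (UNIV :: ((bool \<times> nat) \<times> ('f,'r,bool \<times> nat) fm) set)"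
    using countable_SIGMA[of "UNIV :: (bool \<times> nat) set" "\<lambda>_. UNIV :: ('f,'r,bool \<times> nat) fm set"] cfm by simp
  ultimately show "countable AA" unfolding AA_def using cfm
    by (intro countable_Un countable_image; blast intro: countable_subset)
  show "AA \<noteq> {}" unfolding AA_def by blast
  have met: "metrizable_space (PP :: (('f,'r,bool \<times> nat) fm \<Rightarrow> real) topology)" by (rule completely_metrizable_imp_metrizable_space[OF PP_cm])
  fix S assume "S \<in> AA"
  then consider (a1) \<phi> where "S = A1 \<phi>" | (a2) \<phi> where "S = A2 \<phi>" | (a3) \<phi> where "S = A3 \<phi>"
    | (a4) F where "S = A4 F" | (a5) i where "S = A5 i" | (a6) i where "S = A6 i" | (a7) z where "S = A7 z"
    unfolding AA_def by blast
  then show "gdelta_in PP S"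
  proof cases
    case a1
    have "closedin (PP :: (('f,'r,bool \<times> nat) fm \<Rightarrow> real) topology) {f. f \<phi> \<in> {0,1}}" by (rule coord_closed) (simp add: finite_imp_closed)
    then show ?thesis using a1 unfolding A1_def by (metis closed_imp_gdelta_in[OF met])
  next
    case a2
    have "closedin (PP :: (('f,'r,bool \<times> nat) fm \<Rightarrow> real) topology) {f. f \<phi> \<in> {0}}" by (rule coord_closed) simp
    then show ?thesis using a2 unfolding A2_def by (metis closed_imp_gdelta_in[OF met])
  next
    case a3
    have "closedin (PP :: (('f,'r,bool \<times> nat) fm \<Rightarrow> real) topology) {f. f \<phi> \<in> {1}}" "closedin (PP :: (('f,'r,bool \<times> nat) fm \<Rightarrow> real) topology) {f. f (FNeg \<phi>) \<in> {1}}" by (rule coord_closed, simp)+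
    then show ?thesis using a3 unfolding A3_def by (metis closedin_Un closed_imp_gdelta_in[OF met])
  next
    case a4
    have "openin (PP :: (('f,'r,bool \<times> nat) fm \<Rightarrow> real) topology) (\<Union>\<phi>\<in>F. {f. f \<phi> \<in> {..<1/2}})"
      apply (intro openin_Union)
      apply (erule imageE, simp only:, rule coord_open, rule open_lessThan)
      done
    then show ?thesis using a4 unfolding A4_def by (metis open_imp_gdelta_in)
  next
    case a5
    have "openin (PP :: (('f,'r,bool \<times> nat) fm \<Rightarrow> real) topology) (\<Union>j. {f. f (FEq (Var (False,i)) (Var (True,j))) \<in> {1/2<..}})"
      apply (intro openin_Union)
      apply (erule imageE, simp only:, rule coord_open, rule open_greaterThan)
      done
    then show ?thesis using a5 unfolding A5_def by (metis open_imp_gdelta_in)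
  next
    case a6
    have "openin (PP :: (('f,'r,bool \<times> nat) fm \<Rightarrow> real) topology) (\<Union>j. {f. f (FEq (Var (False,j)) (Var (True,i))) \<in> {1/2<..}})"
      apply (intro openin_Union)
      apply (erule imageE, simp only:, rule coord_open, rule open_greaterThan)
      done
    then show ?thesis using a6 unfolding A6_def by (metis open_imp_gdelta_in)
  next
    case a7
    have "openin (PP :: (('f,'r,bool \<times> nat) fm \<Rightarrow> real) topology) ({f. f (FEx (fst z) (snd z)) \<in> {..<1/2}} \<union>
     (\<Union>w\<in>{w. w \<noteq> fst z}. {f. f (FEx (fst z) (FConj (FEq (Var (fst z)) (Var w)) (snd z))) \<in> {1/2<..}}))"
      apply (intro openin_Un openin_Union)
       apply (rule coord_open, rule open_lessThan)
      apply (erule imageE, simp only:, rule coord_open, rule open_greaterThan)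
      done
    then show ?thesis using a7 unfolding A7_def by (metis open_imp_gdelta_in)
  qed
qed

lemma AA_mem:
  "A1 \<phi> \<in> AA" "\<not> wf_fm arF arR \<phi> \<Longrightarrow> A2 \<phi> \<in> AA" "wf_fm arF arR \<phi> \<Longrightarrow> A3 \<phi> \<in> AA"
  "F \<in> Bad \<Longrightarrow> A4 F \<in> AA" "A5 i \<in> AA" "A6 i \<in> AA" "wf_fm arF arR (snd z) \<Longrightarrow> A7 z \<in> AA"
  unfolding AA_def by blast+

lemma chi_Good: "chi ` Good arF arR T = \<Inter>AA"
proof
  show "chi ` Good arF arR T \<subseteq> \<Inter>AA"
  proof
    fix f assume "f \<in> chi ` Good arF arR T"
    then obtain p where pG: "p \<in> Good arF arR T" and f: "f = chi p" by blast
    have ct: "p \<in> complete_types arF arR T" using pG unfolding Good_def by blast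
    have Gx: "\<forall>i. \<exists>j. FEq (Var (False,i)) (Var (True,j)) \<in> p" and Gy: "\<forall>j. \<exists>i. FEq (Var (False,i)) (Var (True,j)) \<in> p"
      and TV: "\<forall>v \<phi>. wf_fm arF arR \<phi> \<and> FEx v \<phi> \<in> p \<longrightarrow> (\<exists>w. w \<noteq> v \<and> FEx v (FConj (FEq (Var v) (Var w)) \<phi>) \<in> p)"
      using pG unfolding Good_def by blast+
    show "f \<in> \<Inter>AA"
    proof
      fix S assume "S \<in> AA"
      then consider (a1) \<phi> where "S = A1 \<phi>" | (a2) \<phi> where "S = A2 \<phi>" "\<not> wf_fm arF arR \<phi>"
        | (a3) \<phi> where "S = A3 \<phi>" "wf_fm arF arR \<phi>"
        | (a4) F where "S = A4 F" "F \<in> Bad" | (a5) i where "S = A5 i" | (a6) i where "S = A6 i"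
        | (a7) z where "S = A7 z" "wf_fm arF arR (snd z)"
        unfolding AA_def by blast
      then show "f \<in> S"
      proof cases
        case a1 then show ?thesis unfolding A1_def f chi_def by simp
      next
        case a2 then show ?thesis unfolding A2_def f chi_def using ct_wf[OF ct] by auto
      next
        case a3 then show ?thesis unfolding A3_def f chi_def using ct_max[OF ct] by auto
      next
        case a4
        show ?thesis
        proof (rule ccontr)
          assume "f \<notin> S"
          then have "F \<subseteq> p" using a4 unfolding A4_def f chi_def by (auto split: if_splits)
          moreover have "finite F" using a4 unfolding Bad_def by blast
          ultimately show False using ct_sat[OF ct] a4 unfolding Bad_def by blast
        qed
      next
        case a5
        then show ?thesis using Gx unfolding A5_def f chi_def by auto
      next
        case a6
        then show ?thesis using Gy unfolding A6_def f chi_def by auto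
      next
        case a7
        obtain v \<phi> where z: "z = (v, \<phi>)" by (cases z)
        show ?thesis
        proof (cases "FEx v \<phi> \<in> p")
          case True
          have wf\<phi>: "wf_fm arF arR \<phi>" using a7(2) z by simp
          obtain w where w: "w \<noteq> v" "FEx v (FConj (FEq (Var v) (Var w)) \<phi>) \<in> p"
            using TV[rule_format, of \<phi> v] wf\<phi> True by blast
          have "f \<in> {f. f (FEx v (FConj (FEq (Var v) (Var w)) \<phi>)) \<in> {1/2<..}}"
            using w(2) unfolding f chi_def by simp
          then have "f \<in> A7 (v, \<phi>)" unfolding A7_def fst_conv snd_conv
            by (intro UnI2 UN_I[of w]) (simp_all add: w(1))
          then show ?thesis unfolding a7(1) z .
        next
          case False
          then have "f \<in> {f. f (FEx v \<phi>) \<in> {..<1/2}}" unfolding f chi_def by simp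
          then have "f \<in> A7 (v, \<phi>)" unfolding A7_def fst_conv snd_conv by (rule UnI1)
          then show ?thesis unfolding a7(1) z .
        qed
      qed
    qed
  qed
next
  show "\<Inter>AA \<subseteq> chi ` Good arF arR T"
  proof
    fix f assume f: "f \<in> \<Inter>AA"
    have in01: "f \<phi> = 0 \<or> f \<phi> = 1" for \<phi> using f AA_mem(1)[of \<phi>] unfolding A1_def by blast
    define p where "p = {\<phi>. f \<phi> = 1}"
    have fchi: "f = chi p" unfolding chi_def p_def using in01 by (auto simp: fun_eq_iff)
    have wfp: "\<forall>\<phi>\<in>p. wf_fm arF arR \<phi>"
    proof
      fix \<phi> assume "\<phi> \<in> p"
      show "wf_fm arF arR \<phi>"
      proof (rule ccontr)
        assume "\<not> wf_fm arF arR \<phi>"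
        then have "f \<phi> = 0" using f AA_mem(2)[of \<phi>] unfolding A2_def by blast
        then show False using \<open>\<phi> \<in> p\<close> unfolding p_def by simp
      qed
    qed
    have maxp: "\<forall>\<phi>. wf_fm arF arR \<phi> \<longrightarrow> \<phi> \<in> p \<or> FNeg \<phi> \<in> p"
      using f AA_mem(3) unfolding A3_def p_def by blast
    have satp: "\<forall>F. finite F \<and> F \<subseteq> p \<longrightarrow>
        (\<exists>(M :: (nat,'f,'r) struc) e. is_model arF M T \<and> range e \<subseteq> carr M \<and> (\<forall>\<phi>\<in>F. sat M e \<phi>))"
    proof (intro allI impI)
      fix F assume F: "finite F \<and> F \<subseteq> p"
      show "\<exists>(M :: (nat,'f,'r) struc) e. is_model arF M T \<and> range e \<subseteq> carr M \<and> (\<forall>\<phi>\<in>F. sat M e \<phi>)"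
      proof (rule ccontr)
        assume "\<not> ?thesis"
        then have "F \<in> Bad" using F unfolding Bad_def by blast
        then have "f \<in> A4 F" using f AA_mem(4) by blast
        then obtain \<phi> where "\<phi> \<in> F" "f \<phi> < 1/2" unfolding A4_def by auto
        then show False using F unfolding p_def by auto
      qed
    qed
    have ctp: "p \<in> complete_types arF arR T" unfolding complete_types_def using wfp maxp satp by blast
    have half: "f \<phi> > 1/2 \<Longrightarrow> \<phi> \<in> p" for \<phi> using in01[of \<phi>] unfolding p_def by auto
    have Gx: "\<forall>i. \<exists>j. FEq (Var (False,i)) (Var (True,j)) \<in> p"
    proof
      fix i
      have "f \<in> A5 i" using f AA_mem(5) by blast
      then show "\<exists>j. FEq (Var (False,i)) (Var (True,j)) \<in> p" unfolding A5_def using half by auto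
    qed
    have Gy: "\<forall>j. \<exists>i. FEq (Var (False,i)) (Var (True,j)) \<in> p"
    proof
      fix j
      have "f \<in> A6 j" using f AA_mem(6) by blast
      then show "\<exists>i. FEq (Var (False,i)) (Var (True,j)) \<in> p" unfolding A6_def using half by auto
    qed
    have TV: "\<forall>v \<phi>. wf_fm arF arR \<phi> \<and> FEx v \<phi> \<in> p \<longrightarrow> (\<exists>w. w \<noteq> v \<and> FEx v (FConj (FEq (Var v) (Var w)) \<phi>) \<in> p)"
    proof (intro allI impI)
      fix v \<phi> assume a: "wf_fm arF arR \<phi> \<and> FEx v \<phi> \<in> p"
      then have "f \<in> A7 (v, \<phi>)" using f AA_mem(7)[of "(v,\<phi>)"] by auto
      moreover have "f (FEx v \<phi>) = 1" using a unfolding p_def by simp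
      ultimately obtain w where "w \<noteq> v" "f (FEx v (FConj (FEq (Var v) (Var w)) \<phi>)) > 1/2"
        unfolding A7_def by auto
      then show "\<exists>w. w \<noteq> v \<and> FEx v (FConj (FEq (Var v) (Var w)) \<phi>) \<in> p" using half by blast
    qed
    have "p \<in> Good arF arR T" unfolding Good_def using ctp Gx Gy TV by blast
    then show "f \<in> chi ` Good arF arR T" using fchi by blast
  qed
qed

lemma polish_X: "Polish_space (G0_topology arF arR T)"
  unfolding Polish_space_def
proof
  show "separable_space (G0_topology arF arR T)"
    by (rule second_countable_imp_separable_space[OF second_countable_X[OF cf cr wfT]])
  have "gdelta_in (PP :: (('f,'r,bool \<times> nat) fm \<Rightarrow> real) topology) (chi ` G0 arF arR T)"
    using AA_gdelta chi_Good G0_eq_Good[OF wfT] by simp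
  then have "completely_metrizable_space (subtopology (PP :: (('f,'r,bool \<times> nat) fm \<Rightarrow> real) topology) (chi ` G0 arF arR T))"
    by (rule completely_metrizable_space_gdelta_in[OF PP_cm])
  moreover have "G0_topology arF arR T homeomorphic_space subtopology (PP :: (('f,'r,bool \<times> nat) fm \<Rightarrow> real) topology) (chi ` G0 arF arR T)"
    by (rule homeomorphic_map_imp_homeomorphic_space[OF homeo[OF cf cr wfT]])
  ultimately show "completely_metrizable_space (G0_topology arF arR T)"
    using homeomorphic_completely_metrizable_space by blast
qed

end

theorem lemma2p2:
  fixes arF :: "'f \<Rightarrow> nat" and arR :: "'r \<Rightarrow> nat" and T :: "('f,'r,nat) fm set"
  assumes "countable (UNIV :: 'f set)" and "countable (UNIV :: 'r set)"
    and "complete_theory arF arR T"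
  shows "Polish_space (G0_topology arF arR T)
    \<and> open_topological_groupoid (G0_topology arF arR T) (B0 arF arR T)
        (G0_composable arF arR T) (G0_mul arF arR T) (G0_inv arF arR T)
    \<and> (\<forall>(M :: (nat,'f,'r) struc) a b. is_model arF M T \<and> enum M a \<and> enum M b \<longrightarrow>
         G0_mul arF arR T (tp2 arF arR M a b) (G0_inv arF arR T (tp2 arF arR M a b)) = tp2 arF arR M a a
       \<and> G0_mul arF arR T (G0_inv arF arR T (tp2 arF arR M a b)) (tp2 arF arR M a b) = tp2 arF arR M b b)"
proof (intro conjI)
  have wfT: "\<forall>\<sigma>\<in>T. wf_fm arF arR \<sigma>"
    using assms(3) unfolding complete_theory_def sentence_def by blast
  show "Polish_space (G0_topology arF arR T)" by (rule polish_X[OF assms(1,2) wfT])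
  show "\<forall>(M :: (nat,'f,'r) struc) a b. is_model arF M T \<and> enum M a \<and> enum M b \<longrightarrow>
         G0_mul arF arR T (tp2 arF arR M a b) (G0_inv arF arR T (tp2 arF arR M a b)) = tp2 arF arR M a a
       \<and> G0_mul arF arR T (G0_inv arF arR T (tp2 arF arR M a b)) (tp2 arF arR M a b) = tp2 arF arR M b b"
    using t_eq s_eq by blast
  show "open_topological_groupoid (G0_topology arF arR T) (B0 arF arR T)
        (G0_composable arF arR T) (G0_mul arF arR T) (G0_inv arF arR T)"
    unfolding open_topological_groupoid_def Let_def topspace_X
  proof (intro conjI)
    show "\<forall>g\<in>G0 arF arR T. G0_inv arF arR T g \<in> G0 arF arR T \<and> G0_inv arF arR T (G0_inv arF arR T g) = g"
      using alg1 by blast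
    show "\<forall>g\<in>G0 arF arR T. \<forall>h\<in>G0 arF arR T. G0_composable arF arR T g h \<longrightarrow> G0_mul arF arR T g h \<in> G0 arF arR T"
      using alg2 by blast
    show "\<forall>g\<in>G0 arF arR T. G0_composable arF arR T (G0_inv arF arR T g) g \<and> G0_composable arF arR T g (G0_inv arF arR T g)"
      using alg3 by blast
    show "\<forall>g\<in>G0 arF arR T. \<forall>h\<in>G0 arF arR T. G0_composable arF arR T g h =
        (G0_mul arF arR T (G0_inv arF arR T g) g = G0_mul arF arR T h (G0_inv arF arR T h))"
      using alg4 by blast
    show "\<forall>g\<in>G0 arF arR T. \<forall>h\<in>G0 arF arR T. \<forall>k\<in>G0 arF arR T.
       G0_composable arF arR T g h \<and> G0_composable arF arR T h k \<longrightarrow>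
       G0_composable arF arR T (G0_mul arF arR T g h) k \<and> G0_composable arF arR T g (G0_mul arF arR T h k) \<and>
       G0_mul arF arR T (G0_mul arF arR T g h) k = G0_mul arF arR T g (G0_mul arF arR T h k)"
      using alg5 by blast
    show "\<forall>g\<in>G0 arF arR T. \<forall>h\<in>G0 arF arR T. G0_composable arF arR T g h \<longrightarrow>
       G0_mul arF arR T (G0_inv arF arR T g) (G0_mul arF arR T g h) = h \<and>
       G0_mul arF arR T (G0_mul arF arR T g h) (G0_inv arF arR T h) = g"
      using alg6 by blast
    show "B0 arF arR T = (\<lambda>g. G0_mul arF arR T (G0_inv arF arR T g) g) ` G0 arF arR T"
      by (rule alg7)
    show "continuous_map (G0_topology arF arR T) (G0_topology arF arR T) (G0_inv arF arR T)"
      by (rule cont_inv)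
    show "continuous_map (subtopology (prod_topology (G0_topology arF arR T) (G0_topology arF arR T))
       {(g, h). g \<in> G0 arF arR T \<and> h \<in> G0 arF arR T \<and> G0_composable arF arR T g h})
     (G0_topology arF arR T) (\<lambda>(g, h). G0_mul arF arR T g h)"
      by (rule cont_mul)
    show "open_map (G0_topology arF arR T) (subtopology (G0_topology arF arR T) (B0 arF arR T))
     (\<lambda>g. G0_mul arF arR T (G0_inv arF arR T g) g)"
      by (rule open_s)
  qed
qed

end
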